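(* Let $\mu,\nu$ be probability measures on $\mathbb{R}^d$ with finite first moments, i.e. $\int |x|\,\mu(dx)<\infty$ and $\int |y|\,\nu(dy)<\infty$. Then \[ \inf_{f\in \mathcal{C}^1(\mathbb{R}^d)}\left(\int f\,d\nu - \int f\,d\mu \right)=\inf_{\rho\in \mathcal{P}^1(\mathbb{R}^d)} \left( C(\nu,\rho)-C(\mu,\rho)\right), \] where $\mathcal{P}^1(\mathbb{R}^d):=\{\rho\in \mathcal{P}(\mathbb{R}^d): \mathrm{supp}(\rho)\subseteq B_1(0)\}$ and $\mathcal{C}^1(\mathbb{R}^d):=\{f:\mathbb{R}^d\to \mathbb{R} \text{ convex and } 1\text{-Lipschitz}\}$.
   Context: $\mathcal{P}(\mathbb{R}^d)$ is the set of Borel probability measures on $\mathbb{R}^d$; $B_1(0)$ is the closed/open Euclidean unit ball around $0$ (support contained in the unit ball). For probability measures $\alpha,\rho$ on $\mathbb{R}^d$, $\Pi(\alpha,\rho)$ denotes the set of couplings (probability measures on $\mathbb{R}^d\times\mathbb{R}^d$ with marginals $\alpha$ and $\rho$), and $C(\alpha,\rho):=\sup_{\pi\in\Pi(\alpha,\rho)}\int \langle x,y\rangle\,\pi(dx,dy)$, with $\langle\cdot,\cdot\rangle$ the Euclidean scalar product. *)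

theory Defs
  imports "HOL-Probability.Probability"
begin

definition prob_measures :: "('a::euclidean_space) measure set" where
  "prob_measures = {M. prob_space M \<and> sets M = sets borel}"

definition measure_support :: "('a::metric_space) measure \<Rightarrow> 'a set" where
  "measure_support M = {x. \<forall>e>0. emeasure M (ball x e) > 0}"

definition couplings :: "('a::euclidean_space) measure \<Rightarrow> 'a measure \<Rightarrow> ('a \<times> 'a) measure set" where
  "couplings \<alpha> \<rho> = {\<pi>. prob_space \<pi> \<and> sets \<pi> = sets (borel \<Otimes>\<^sub>M borel)
      \<and> distr \<pi> borel fst = \<alpha> \<and> distr \<pi> borel snd = \<rho>}"

definition Ccost :: "('a::euclidean_space) measure \<Rightarrow> 'a measure \<Rightarrow> real" where
  "Ccost \<alpha> \<rho> = (SUP \<pi>\<in>couplings \<alpha> \<rho>. \<integral>z. (fst z \<bullet> snd z) \<partial>\<pi>)"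

definition P1 :: "('a::euclidean_space) measure set" where
  "P1 = {\<rho>\<in>prob_measures. measure_support \<rho> \<subseteq> cball 0 1}"

definition C1 :: "(('a::euclidean_space) \<Rightarrow> real) set" where
  "C1 = {f. convex_on UNIV f \<and> 1-lipschitz_on UNIV f}"

end

theory Submission
  imports Defs "HOL-Analysis.Analysis"
begin

lemma subgradient_exists:
  fixes f :: "'a::euclidean_space \<Rightarrow> real"
  assumes cv: "convex_on UNIV f" and lip: "1-lipschitz_on UNIV f"
  shows "\<exists>g. norm g \<le> 1 \<and> (\<forall>y. f x + g \<bullet> (y - x) \<le> f y)"
proof -
  define S :: "('a \<times> real) set" where "S = {(y,t). f y \<le> t}"
  have contf: "continuous_on UNIV f" using lip by (rule lipschitz_on_continuous_on)
  have convS: "convex S"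
    unfolding S_def convex_def
  proof (clarsimp)
    fix y t y' t' and u v :: real
    assume "f y \<le> t" "f y' \<le> t'" "0 \<le> u" "0 \<le> v" "u + v = 1"
    then have "f (u *\<^sub>R y + v *\<^sub>R y') \<le> u * f y + v * f y'"
      using cv by (simp add: convex_on_def)
    also have "\<dots> \<le> u * t + v * t'"
      using \<open>f y \<le> t\<close> \<open>f y' \<le> t'\<close> \<open>0 \<le> u\<close> \<open>0 \<le> v\<close> by (intro add_mono mult_left_mono) auto
    finally show "f (u *\<^sub>R y + v *\<^sub>R y') \<le> u * t + v * t'" .
  qed
  have x0S: "(x, f x) \<in> S" by (simp add: S_def)
  have openU: "open {p :: 'a \<times> real. f (fst p) < snd p}"
  proof (rule open_Collect_less)
    show "continuous_on UNIV (\<lambda>p::'a \<times> real. f (fst p))"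
      using continuous_on_compose2[OF contf continuous_on_fst[OF continuous_on_id]] by simp
  qed (intro continuous_on_snd continuous_on_id)
  have "{p :: 'a \<times> real. f (fst p) < snd p} \<subseteq> S" by (auto simp: S_def)
  then have "(x, f x + 1) \<in> interior S"
    using openU by (intro interior_maximal[THEN subsetD, of "{p :: 'a \<times> real. f (fst p) < snd p}"]) auto
  then have intne: "interior S \<noteq> {}" by auto
  then have "rel_interior S = interior S"
    by (simp add: rel_interior_interior affine_hull_nonempty_interior)
  moreover have "(x, f x) \<notin> interior S"
  proof
    assume "(x, f x) \<in> interior S"
    then obtain e where e: "e > 0" "ball (x, f x) e \<subseteq> S"
      by (meson open_contains_ball_eq open_interior interior_subset subset_trans)
    have "(x, f x - e/2) \<in> ball (x, f x) e" using e by (simp add: dist_Pair_Pair dist_real_def)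
    with e have "(x, f x - e/2) \<in> S" by auto
    then show False using e by (simp add: S_def)
  qed
  ultimately have xno: "(x, f x) \<notin> rel_interior S" by simp
  obtain a where a0: "a \<noteq> 0" and sup: "\<And>y. y \<in> S \<Longrightarrow> a \<bullet> (x, f x) \<le> a \<bullet> y"
    and "\<And>y. y \<in> rel_interior S \<Longrightarrow> a \<bullet> (x, f x) < a \<bullet> y"
    using supporting_hyperplane_rel_boundary[OF convS x0S xno] by metis
  obtain a1 a2 where aeq: "a = (a1, a2)" by (cases a)
  have key: "a1 \<bullet> x + a2 * f x \<le> a1 \<bullet> y + a2 * t" if "f y \<le> t" for y t
    using sup[of "(y,t)"] that by (simp add: S_def aeq inner_Pair)
  have a2pos: "a2 > 0"
  proof (rule ccontr)
    assume "\<not> a2 > 0"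
    then consider "a2 < 0" | "a2 = 0" by linarith
    then show False
    proof cases
      case 1
      have "a1 \<bullet> x + a2 * f x \<le> a1 \<bullet> x + a2 * (f x + 1)" by (rule key) simp
      then show False using 1 by (simp add: algebra_simps)
    next
      case 2
      then have "a1 \<noteq> 0" using a0 aeq by (auto simp: zero_prod_def)
      have "a1 \<bullet> x \<le> a1 \<bullet> (x - a1)" using key[of "x - a1" "f (x - a1)"] 2 by simp
      then have "a1 \<bullet> a1 \<le> 0" by (simp add: inner_diff_right)
      then show False using \<open>a1 \<noteq> 0\<close> by (metis inner_gt_zero_iff not_le)
    qed
  qed
  define g where "g = - (1/a2) *\<^sub>R a1"
  have sg: "f x + g \<bullet> (y - x) \<le> f y" for y
  proof -
    have "a1 \<bullet> x + a2 * f x \<le> a1 \<bullet> y + a2 * f y" by (rule key) simp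
    then have "a2 * (f x + g \<bullet> (y - x)) \<le> a2 * f y"
      using a2pos by (simp add: g_def inner_diff_right algebra_simps)
    then show ?thesis using a2pos by simp
  qed
  have "norm g \<le> 1"
  proof -
    have "f x + g \<bullet> g \<le> f (x + g)" using sg[of "x + g"] by simp
    moreover have "f (x + g) - f x \<le> norm g"
      using lipschitz_onD[OF lip, of "x+g" x] by (simp add: dist_norm)
    ultimately have "norm g ^ 2 \<le> norm g" by (simp add: power2_norm_eq_inner)
    then show ?thesis by (cases "norm g = 0") (auto simp: power2_eq_square)
  qed
  with sg show ?thesis by blast
qed

lemma prob_measuresD:
  assumes "\<alpha> \<in> prob_measures"
  shows "prob_space \<alpha>" "sets \<alpha> = sets borel" "space \<alpha> = UNIV"
  using assms by (auto simp: prob_measures_def dest: sets_eq_imp_space_eq)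

lemma P1_AE:
  fixes \<rho> :: "'a::euclidean_space measure"
  assumes "\<rho> \<in> P1"
  shows "AE z in \<rho>. norm z \<le> 1"
proof -
  have sp: "sets \<rho> = sets borel" using assms by (auto simp: P1_def prob_measures_def)
  define F where "F = {ball x e | x e. e > 0 \<and> emeasure \<rho> (ball x e) = 0}"
  have "\<And>S. S \<in> F \<Longrightarrow> open S" by (auto simp: F_def)
  then obtain F' where F': "F' \<subseteq> F" "countable F'" "\<Union>F' = \<Union>F" by (rule Lindelof)
  have "(\<Union>S\<in>F'. S) \<in> null_sets \<rho>"
  proof (rule null_sets_UN')
    show "countable F'" by fact
    fix S assume "S \<in> F'"
    then have "S \<in> F" using F' by auto
    then show "S \<in> null_sets \<rho>" by (auto simp: F_def null_sets_def sp)
  qed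
  moreover have "{z \<in> space \<rho>. \<not> norm z \<le> 1} \<subseteq> (\<Union>S\<in>F'. S)"
  proof
    fix z assume z: "z \<in> {z \<in> space \<rho>. \<not> norm z \<le> 1}"
    then have "z \<notin> measure_support \<rho>" using assms by (auto simp: P1_def)
    then obtain e where "e > 0" "\<not> emeasure \<rho> (ball z e) > 0" by (auto simp: measure_support_def)
    then have "ball z e \<in> F" by (auto simp: F_def)
    then have "z \<in> \<Union>F" using \<open>e > 0\<close> by (intro UnionI[of "ball z e"]) auto
    then show "z \<in> (\<Union>S\<in>F'. S)" using F' by auto
  qed
  ultimately show ?thesis by (intro AE_I') auto
qed

lemma P1_prob: "\<rho> \<in> P1 \<Longrightarrow> \<rho> \<in> prob_measures" by (simp add: P1_def)

context
  fixes \<alpha> \<rho> :: "'a::euclidean_space measure" and \<pi> :: "('a \<times> 'a) measure"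
  assumes cp: "\<pi> \<in> couplings \<alpha> \<rho>"
begin

lemma cp_sets: "sets \<pi> = sets (borel \<Otimes>\<^sub>M borel)" using cp by (simp add: couplings_def)
lemma cp_prob: "prob_space \<pi>" using cp by (simp add: couplings_def)
lemma cp_fst_meas: "fst \<in> measurable \<pi> borel"
  using measurable_cong_sets[OF cp_sets refl] measurable_fst by blast
lemma cp_snd_meas: "snd \<in> measurable \<pi> borel"
  using measurable_cong_sets[OF cp_sets refl] measurable_snd by blast
lemma cp_meas: "g \<in> borel_measurable (borel \<Otimes>\<^sub>M borel) \<Longrightarrow> g \<in> borel_measurable \<pi>"
  using measurable_cong_sets[OF cp_sets refl] by blast

lemma cp_int_fst:
  fixes g :: "'a \<Rightarrow> real"
  assumes "g \<in> borel_measurable borel"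
  shows "(\<integral>z. g (fst z) \<partial>\<pi>) = (\<integral>x. g x \<partial>\<alpha>)"
    and "integrable \<pi> (\<lambda>z. g (fst z)) \<longleftrightarrow> integrable \<alpha> g"
proof -
  have d: "distr \<pi> borel fst = \<alpha>" using cp by (simp add: couplings_def)
  show "(\<integral>z. g (fst z) \<partial>\<pi>) = (\<integral>x. g x \<partial>\<alpha>)"
    using integral_distr[OF cp_fst_meas assms] d by simp
  show "integrable \<pi> (\<lambda>z. g (fst z)) \<longleftrightarrow> integrable \<alpha> g"
    using integrable_distr_eq[OF cp_fst_meas assms] d by simp
qed

lemma cp_int_snd:
  fixes g :: "'a \<Rightarrow> real"
  assumes "g \<in> borel_measurable borel"
  shows "(\<integral>z. g (snd z) \<partial>\<pi>) = (\<integral>x. g x \<partial>\<rho>)"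
    and "integrable \<pi> (\<lambda>z. g (snd z)) \<longleftrightarrow> integrable \<rho> g"
proof -
  have d: "distr \<pi> borel snd = \<rho>" using cp by (simp add: couplings_def)
  show "(\<integral>z. g (snd z) \<partial>\<pi>) = (\<integral>x. g x \<partial>\<rho>)"
    using integral_distr[OF cp_snd_meas assms] d by simp
  show "integrable \<pi> (\<lambda>z. g (snd z)) \<longleftrightarrow> integrable \<rho> g"
    using integrable_distr_eq[OF cp_snd_meas assms] d by simp
qed

lemma cp_AE_snd:
  assumes "AE x in \<rho>. P x" "{x. P x} \<in> sets borel"
  shows "AE z in \<pi>. P (snd z)"
proof -
  have d: "distr \<pi> borel snd = \<rho>" using cp by (simp add: couplings_def)
  have "AE x in distr \<pi> borel snd. P x" by (subst d) (rule assms(1))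
  then show ?thesis using AE_distr_iff[OF cp_snd_meas] assms(2) by simp
qed

lemma cp_AE_fst:
  assumes "AE x in \<alpha>. P x" "{x. P x} \<in> sets borel"
  shows "AE z in \<pi>. P (fst z)"
proof -
  have d: "distr \<pi> borel fst = \<alpha>" using cp by (simp add: couplings_def)
  have "AE x in distr \<pi> borel fst. P x" by (subst d) (rule assms(1))
  then show ?thesis using AE_distr_iff[OF cp_fst_meas] assms(2) by simp
qed

end

lemma cp_inner_bound:
  fixes \<alpha> \<rho> :: "'a::euclidean_space measure"
  assumes cp: "\<pi> \<in> couplings \<alpha> \<rho>" and rho: "\<rho> \<in> P1" and ia: "integrable \<alpha> norm"
  shows "integrable \<pi> (\<lambda>z. fst z \<bullet> snd z)"
    and "\<bar>\<integral>z. fst z \<bullet> snd z \<partial>\<pi>\<bar> \<le> (\<integral>x. norm x \<partial>\<alpha>)"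
proof -
  have ae: "AE z in \<pi>. norm (snd z) \<le> 1"
    by (rule cp_AE_snd[OF cp P1_AE[OF rho]]) simp
  have bnd: "AE z in \<pi>. norm (fst z \<bullet> snd z) \<le> norm (fst z)"
    using ae
  proof eventually_elim
    case (elim z)
    have "norm (fst z \<bullet> snd z) \<le> norm (fst z) * norm (snd z)"
      by (simp add: Cauchy_Schwarz_ineq2)
    also have "\<dots> \<le> norm (fst z)" using elim by (simp add: mult_left_le)
    finally show ?case .
  qed
  have inorm: "integrable \<pi> (\<lambda>z. norm (fst z))"
    using cp_int_fst(2)[OF cp, of norm] ia by simp
  show int: "integrable \<pi> (\<lambda>z. fst z \<bullet> snd z)"
  proof (rule Bochner_Integration.integrable_bound[OF inorm])
    show "(\<lambda>z. fst z \<bullet> snd z) \<in> borel_measurable \<pi>" by (rule cp_meas[OF cp]) simp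
    show "AE z in \<pi>. norm (fst z \<bullet> snd z) \<le> norm (norm (fst z))" using bnd by simp
  qed
  have "\<bar>\<integral>z. fst z \<bullet> snd z \<partial>\<pi>\<bar> \<le> (\<integral>z. \<bar>fst z \<bullet> snd z\<bar> \<partial>\<pi>)"
    by (rule integral_abs_bound)
  also have "\<dots> \<le> (\<integral>z. norm (fst z) \<partial>\<pi>)"
    by (rule integral_mono_AE) (use int inorm bnd in auto)
  also have "\<dots> = (\<integral>x. norm x \<partial>\<alpha>)" using cp_int_fst(1)[OF cp, of norm] by simp
  finally show "\<bar>\<integral>z. fst z \<bullet> snd z \<partial>\<pi>\<bar> \<le> (\<integral>x. norm x \<partial>\<alpha>)" .
qed

lemma product_coupling:
  fixes \<alpha> \<rho> :: "'a::euclidean_space measure"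
  assumes a: "\<alpha> \<in> prob_measures" and r: "\<rho> \<in> prob_measures"
  shows "\<alpha> \<Otimes>\<^sub>M \<rho> \<in> couplings \<alpha> \<rho>"
proof -
  note A = prob_measuresD[OF a] and R = prob_measuresD[OF r]
  interpret pp: pair_prob_space \<alpha> \<rho>
    by (simp add: pair_prob_space_def pair_sigma_finite_def A(1) R(1) prob_space_imp_sigma_finite)
  have s: "sets (\<alpha> \<Otimes>\<^sub>M \<rho>) = sets (borel \<Otimes>\<^sub>M borel)"
    using A(2) R(2) by (intro sets_pair_measure_cong) auto
  have d1: "distr (\<alpha> \<Otimes>\<^sub>M \<rho>) borel fst = \<alpha>"
  proof -
    have "distr (\<alpha> \<Otimes>\<^sub>M \<rho>) borel fst = distr (\<alpha> \<Otimes>\<^sub>M \<rho>) \<alpha> fst"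
      using A(2) by (intro distr_cong) auto
    also have "\<dots> = \<alpha>" by (rule pp.M2.distr_pair_fst)
    finally show ?thesis .
  qed
  have d2: "distr (\<alpha> \<Otimes>\<^sub>M \<rho>) borel snd = \<rho>"
  proof -
    have "distr (\<alpha> \<Otimes>\<^sub>M \<rho>) borel snd = distr (\<alpha> \<Otimes>\<^sub>M \<rho>) \<rho> snd"
      using R(2) by (intro distr_cong) auto
    also have "\<dots> = \<rho>"
    proof (intro measure_eqI)
      fix B assume B: "B \<in> sets (distr (\<alpha> \<Otimes>\<^sub>M \<rho>) \<rho> snd)"
      then have "emeasure (distr (\<alpha> \<Otimes>\<^sub>M \<rho>) \<rho> snd) B = emeasure (\<alpha> \<Otimes>\<^sub>M \<rho>) (space \<alpha> \<times> B)"
        by (auto simp add: emeasure_distr space_pair_measure dest: sets.sets_into_space intro!: arg_cong2[where f=emeasure])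
      moreover have "emeasure (\<alpha> \<Otimes>\<^sub>M \<rho>) (space \<alpha> \<times> B) = emeasure \<alpha> (space \<alpha>) * emeasure \<rho> B"
        using B by (intro pp.M2.emeasure_pair_measure_Times) auto
      ultimately show "emeasure (distr (\<alpha> \<Otimes>\<^sub>M \<rho>) \<rho> snd) B = emeasure \<rho> B"
        by (simp add: pp.M1.emeasure_space_1)
    qed simp
    finally show ?thesis .
  qed
  show ?thesis unfolding couplings_def using s d1 d2 pp.prob_space_axioms by auto
qed

lemma Ccost_bdd:
  fixes \<alpha> \<rho> :: "'a::euclidean_space measure"
  assumes a: "\<alpha> \<in> prob_measures" and rho: "\<rho> \<in> P1" and ia: "integrable \<alpha> norm"
  shows "bdd_above ((\<lambda>\<pi>. \<integral>z. fst z \<bullet> snd z \<partial>\<pi>) ` couplings \<alpha> \<rho>)"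
    and "couplings \<alpha> \<rho> \<noteq> {}"
proof -
  show "bdd_above ((\<lambda>\<pi>. \<integral>z. fst z \<bullet> snd z \<partial>\<pi>) ` couplings \<alpha> \<rho>)"
    by (rule bdd_aboveI[where M="\<integral>x. norm x \<partial>\<alpha>"])
       (use cp_inner_bound(2)[OF _ rho ia] in fastforce)
  show "couplings \<alpha> \<rho> \<noteq> {}" using product_coupling[OF a P1_prob[OF rho]] by auto
qed

lemma Ccost_ge:
  fixes \<alpha> \<rho> :: "'a::euclidean_space measure"
  assumes a: "\<alpha> \<in> prob_measures" and rho: "\<rho> \<in> P1" and ia: "integrable \<alpha> norm"
    and cp: "\<pi> \<in> couplings \<alpha> \<rho>"
  shows "(\<integral>z. fst z \<bullet> snd z \<partial>\<pi>) \<le> Ccost \<alpha> \<rho>"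
  unfolding Ccost_def by (rule cSUP_upper[OF cp Ccost_bdd(1)[OF a rho ia]])

lemma Ccost_le:
  fixes \<alpha> \<rho> :: "'a::euclidean_space measure"
  assumes a: "\<alpha> \<in> prob_measures" and rho: "\<rho> \<in> P1" and ia: "integrable \<alpha> norm"
    and B: "\<And>\<pi>. \<pi> \<in> couplings \<alpha> \<rho> \<Longrightarrow> (\<integral>z. fst z \<bullet> snd z \<partial>\<pi>) \<le> B"
  shows "Ccost \<alpha> \<rho> \<le> B"
  unfolding Ccost_def by (rule cSUP_least[OF Ccost_bdd(2)[OF a rho ia] B])

lemma Ccost_abs:
  fixes \<alpha> \<rho> :: "'a::euclidean_space measure"
  assumes a: "\<alpha> \<in> prob_measures" and rho: "\<rho> \<in> P1" and ia: "integrable \<alpha> norm"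
  shows "\<bar>Ccost \<alpha> \<rho>\<bar> \<le> (\<integral>x. norm x \<partial>\<alpha>)"
proof -
  obtain \<pi> where cp: "\<pi> \<in> couplings \<alpha> \<rho>" using Ccost_bdd(2)[OF a rho ia] by auto
  have "Ccost \<alpha> \<rho> \<le> (\<integral>x. norm x \<partial>\<alpha>)"
    by (rule Ccost_le[OF a rho ia]) (use cp_inner_bound(2)[OF _ rho ia] in fastforce)
  moreover have "- (\<integral>x. norm x \<partial>\<alpha>) \<le> Ccost \<alpha> \<rho>"
    using Ccost_ge[OF a rho ia cp] cp_inner_bound(2)[OF cp rho ia] by linarith
  ultimately show ?thesis by linarith
qed

definition qz :: "real \<Rightarrow> real \<Rightarrow> 'a::euclidean_space \<Rightarrow> 'a" where
  "qz d R v = (if norm v \<le> R then (\<Sum>b\<in>Basis. (d * of_int \<lfloor>\<bar>v \<bullet> b\<bar> / d\<rfloor> * sgn (v \<bullet> b)) *\<^sub>R b) else 0)"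

lemma sum_Basis_inner:
  fixes c :: "'a::euclidean_space \<Rightarrow> real"
  assumes "b \<in> Basis"
  shows "(\<Sum>b'\<in>Basis. c b' *\<^sub>R b') \<bullet> b = c b"
  using assms by (simp add: inner_sum_left inner_Basis if_distrib sum.delta cong: if_cong)

lemma qz_comp:
  fixes v :: "'a::euclidean_space"
  assumes "b \<in> Basis" "norm v \<le> R"
  shows "qz d R v \<bullet> b = d * of_int \<lfloor>\<bar>v \<bullet> b\<bar> / d\<rfloor> * sgn (v \<bullet> b)"
  using assms by (simp add: qz_def sum_Basis_inner)

lemma trunc_bounds:
  fixes t d :: real
  assumes "d > 0"
  shows "\<bar>d * of_int \<lfloor>\<bar>t\<bar> / d\<rfloor> * sgn t\<bar> \<le> \<bar>t\<bar>"
    and "\<bar>t - d * of_int \<lfloor>\<bar>t\<bar> / d\<rfloor> * sgn t\<bar> < d"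
proof -
  have f1: "of_int \<lfloor>\<bar>t\<bar> / d\<rfloor> \<le> \<bar>t\<bar> / d" by (rule of_int_floor_le)
  have f2: "\<bar>t\<bar> / d < of_int \<lfloor>\<bar>t\<bar> / d\<rfloor> + 1" by (rule real_of_int_floor_add_one_gt)
  have "0 \<le> \<lfloor>\<bar>t\<bar> / d\<rfloor>" using assms by simp
  then have f0: "0 \<le> (of_int \<lfloor>\<bar>t\<bar> / d\<rfloor> :: real)" by simp
  have a1: "d * of_int \<lfloor>\<bar>t\<bar> / d\<rfloor> \<le> \<bar>t\<bar>" using mult_left_mono[OF f1, of d] assms by simp
  have a2: "\<bar>t\<bar> < d * of_int \<lfloor>\<bar>t\<bar> / d\<rfloor> + d" using f2 assms by (simp add: field_simps)
  have a0: "0 \<le> d * of_int \<lfloor>\<bar>t\<bar> / d\<rfloor>" using f0 assms by simp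
  show "\<bar>d * of_int \<lfloor>\<bar>t\<bar> / d\<rfloor> * sgn t\<bar> \<le> \<bar>t\<bar>"
    using a1 a0 by (cases "t > 0"; cases "t = 0") (auto simp: abs_mult)
  show "\<bar>t - d * of_int \<lfloor>\<bar>t\<bar> / d\<rfloor> * sgn t\<bar> < d"
    using a1 a2 a0 assms by (cases "t > 0"; cases "t = 0") auto
qed

lemma norm_le_by_comp:
  fixes w v :: "'a::euclidean_space"
  assumes "\<And>b. b \<in> Basis \<Longrightarrow> \<bar>w \<bullet> b\<bar> \<le> \<bar>v \<bullet> b\<bar>"
  shows "norm w \<le> norm v"
proof -
  have "w \<bullet> w \<le> v \<bullet> v"
    unfolding euclidean_inner[of w w] euclidean_inner[of v v]
  proof (rule sum_mono)
    fix b :: 'a assume "b \<in> Basis"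
    then have "\<bar>w \<bullet> b\<bar> * \<bar>w \<bullet> b\<bar> \<le> \<bar>v \<bullet> b\<bar> * \<bar>v \<bullet> b\<bar>"
      using assms by (intro mult_mono) auto
    then show "(w \<bullet> b) * (w \<bullet> b) \<le> (v \<bullet> b) * (v \<bullet> b)" by (simp add: abs_mult[symmetric])
  qed
  then show ?thesis by (simp add: norm_eq_sqrt_inner)
qed

lemma qz_norm: "d > 0 \<Longrightarrow> norm (qz d R v) \<le> norm v"
proof (cases "norm v \<le> R")
  case True
  assume d: "d > 0"
  show ?thesis
    by (rule norm_le_by_comp) (simp add: qz_comp[OF _ True] trunc_bounds(1)[OF d])
qed (simp add: qz_def)

lemma qz_err: 
  fixes v :: "'a::euclidean_space" and d :: real
  assumes "d > 0" "norm v \<le> R"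
  shows "norm (v - qz d R v) \<le> DIM('a) * d"
proof -
  have "norm (v - qz d R v) \<le> (\<Sum>b\<in>Basis. \<bar>(v - qz d R v) \<bullet> b\<bar>)" by (rule norm_le_l1)
  also have "\<dots> \<le> (\<Sum>b\<in>(Basis::'a set). d)"
  proof (rule sum_mono)
    fix b :: 'a assume "b \<in> Basis"
    then show "\<bar>(v - qz d R v) \<bullet> b\<bar> \<le> d"
      using trunc_bounds(2)[OF assms(1), of "v \<bullet> b"] qz_comp[OF _ assms(2)]
      by (simp add: inner_diff_left)
  qed
  finally show ?thesis by simp
qed

lemma qz_far: "\<not> norm v \<le> R \<Longrightarrow> qz d R v = 0" by (simp add: qz_def)

lemma finite_comp_set:
  assumes "finite F"
  shows "finite {w::'a::euclidean_space. \<forall>b\<in>Basis. w \<bullet> b \<in> F}"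
proof -
  have "{w::'a. \<forall>b\<in>Basis. w \<bullet> b \<in> F} \<subseteq> (\<lambda>k. \<Sum>b\<in>Basis. k b *\<^sub>R b) ` (PiE Basis (\<lambda>_. F))"
  proof
    fix w :: 'a assume w: "w \<in> {w. \<forall>b\<in>Basis. w \<bullet> b \<in> F}"
    have "w = (\<lambda>k. \<Sum>b\<in>Basis. k b *\<^sub>R b) (restrict (\<lambda>b. w \<bullet> b) Basis)"
      by (simp add: euclidean_representation)
    moreover have "restrict (\<lambda>b. w \<bullet> b) Basis \<in> PiE Basis (\<lambda>_. F)" using w by auto
    ultimately show "w \<in> (\<lambda>k. \<Sum>b\<in>Basis. k b *\<^sub>R b) ` (PiE Basis (\<lambda>_. F))" by blast
  qed
  then show ?thesis by (rule finite_subset) (intro finite_imageI finite_PiE assms finite_Basis)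
qed

lemma qz_finite:
  assumes d: "d > 0"
  shows "finite (range (qz d R :: 'a::euclidean_space \<Rightarrow> 'a))"
proof -
  define N where "N = \<lceil>R / d\<rceil>"
  define F where "F = (\<lambda>k. d * of_int k) ` {-N..N}"
  have "range (qz d R :: 'a \<Rightarrow> 'a) \<subseteq> insert 0 {w. \<forall>b\<in>Basis. w \<bullet> b \<in> F}"
  proof
    fix w :: 'a assume "w \<in> range (qz d R)"
    then obtain v where wv: "w = qz d R v" by auto
    show "w \<in> insert 0 {w. \<forall>b\<in>Basis. w \<bullet> b \<in> F}"
    proof (cases "norm v \<le> R")
      case False then show ?thesis by (simp add: wv qz_def)
    next
      case True
      have "w \<bullet> b \<in> F" if b: "b \<in> Basis" for b
      proof -
        define t where "t = v \<bullet> b"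
        have "\<bar>t\<bar> \<le> R" using Basis_le_norm[OF b, of v] True by (simp add: t_def)
        define k where "k = \<lfloor>\<bar>t\<bar> / d\<rfloor>"
        have k0: "0 \<le> k" using d by (simp add: k_def)
        have "of_int k \<le> \<bar>t\<bar> / d" by (simp add: k_def)
        also have "\<dots> \<le> R / d" using \<open>\<bar>t\<bar> \<le> R\<close> d by (simp add: divide_right_mono)
        also have "\<dots> \<le> of_int N" by (simp add: N_def)
        finally have kN: "k \<le> N" by linarith
        have "w \<bullet> b = d * of_int (k * (if t > 0 then 1 else if t = 0 then 0 else -1))"
          by (simp add: wv qz_comp[OF b True] t_def[symmetric] k_def sgn_real_def)
        moreover have "k * (if t > 0 then 1 else if t = 0 then 0 else -1) \<in> {-N..N}"
          using k0 kN by auto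
        ultimately show ?thesis unfolding F_def by blast
      qed
      then show ?thesis by auto
    qed
  qed
  moreover have "finite F" by (simp add: F_def)
  moreover have "finite {w::'a. \<forall>b\<in>Basis. w \<bullet> b \<in> F}" by (rule finite_comp_set) fact
  ultimately show ?thesis by (meson finite_insert finite_subset)
qed

lemma qz_meas: "qz d R \<in> borel_measurable borel"
  unfolding qz_def by measurable

lemma finite_range_comp_meas:
  fixes T :: "'b \<Rightarrow> 'a::euclidean_space"
  assumes T: "T \<in> borel_measurable M" and fin: "finite (range T)"
    and g: "\<And>j. (\<lambda>x. g j x) \<in> measurable M N"
  shows "(\<lambda>x. g (T x) x) \<in> measurable M N"
proof (rule measurable_compose_countable'[OF g])
  show "countable (range T)" using fin by (rule countable_finite)
  show "T \<in> measurable M (count_space (range T))"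
  proof (subst measurable_count_space_eq_countable)
    show "countable (range T)" using fin by (rule countable_finite)
    have "T -` {a} \<inter> space M \<in> sets M" for a
      using measurable_sets[OF T, of "{a}"] by (simp add: vimage_def)
    then show "T \<in> space M \<rightarrow> range T \<and> (\<forall>a\<in>range T. T -` {a} \<inter> space M \<in> sets M)" by auto
  qed
qed

lemma integral_finite_range:
  fixes T :: "'b \<Rightarrow> 'a::euclidean_space" and g :: "'a \<Rightarrow> real"
  assumes T: "T \<in> borel_measurable M" and fin: "finite (range T)" and fm: "finite_measure M"
  shows "integrable M (\<lambda>x. g (T x))"
    and "(\<integral>x. g (T x) \<partial>M) = (\<Sum>j\<in>range T. g j * measure M (T -` {j} \<inter> space M))"
proof -
  interpret finite_measure M by (rule fm)
  have sets: "T -` {j} \<inter> space M \<in> sets M" for j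
    using measurable_sets[OF T, of "{j}"] by (simp add: vimage_def)
  have eq: "g (T x) = (\<Sum>j\<in>range T. g j * indicator (T -` {j} \<inter> space M) x)" if "x \<in> space M" for x
  proof -
    have "(\<Sum>j\<in>range T. g j * indicator (T -` {j} \<inter> space M) x) = (\<Sum>j\<in>range T. if j = T x then g j else 0)"
      using that by (intro sum.cong) (auto simp: indicator_def)
    also have "\<dots> = g (T x)" using fin by (simp add: sum.delta')
    finally show ?thesis by simp
  qed
  have int: "integrable M (\<lambda>x. \<Sum>j\<in>range T. g j * indicator (T -` {j} \<inter> space M) x)"
    using sets by (intro Bochner_Integration.integrable_sum Bochner_Integration.integrable_mult_right integrable_real_indicator) (auto simp: less_top[symmetric])
  have "integrable M (\<lambda>x. g (T x)) = integrable M (\<lambda>x. \<Sum>j\<in>range T. g j * indicator (T -` {j} \<inter> space M) x)"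
    by (rule Bochner_Integration.integrable_cong[OF refl]) (auto simp: eq)
  then show "integrable M (\<lambda>x. g (T x))" using int by simp
  have "(\<integral>x. g (T x) \<partial>M) = (\<integral>x. (\<Sum>j\<in>range T. g j * indicator (T -` {j} \<inter> space M) x) \<partial>M)"
    by (rule Bochner_Integration.integral_cong) (auto simp: eq)
  also have "\<dots> = (\<Sum>j\<in>range T. g j * measure M (T -` {j} \<inter> space M))"
    using sets by (subst Bochner_Integration.integral_sum) (auto intro!: integrable_mult_right integrable_indicator simp: less_top[symmetric] Int_absorb2 sets.sets_into_space)
  finally show "(\<integral>x. g (T x) \<partial>M) = (\<Sum>j\<in>range T. g j * measure M (T -` {j} \<inter> space M))" .
qed

lemma tail_small:
  fixes \<alpha> :: "'a::euclidean_space measure"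
  assumes ia: "integrable \<alpha> norm" and e: "e > 0"
  shows "\<exists>R>0. (\<integral>x. norm x * indicator {x. R < norm x} x \<partial>\<alpha>) < e"
proof -
  define s where "s = (\<lambda>(n::nat) (x::'a). norm x * indicator {x. real (Suc n) < norm x} x :: real)"
  have ms: "s n \<in> borel_measurable \<alpha>" for n
  proof -
    have "norm \<in> borel_measurable \<alpha>" using ia by auto
    then show ?thesis unfolding s_def by measurable
  qed
  have lim: "AE x in \<alpha>. (\<lambda>n. s n x) \<longlonglongrightarrow> 0"
  proof (rule AE_I2)
    fix x :: 'a
    obtain N :: nat where "norm x \<le> real N" using real_arch_simple by blast
    then have "\<forall>n\<ge>N. s n x = 0" by (auto simp: s_def indicator_def)
    then show "(\<lambda>n. s n x) \<longlonglongrightarrow> 0" by (intro tendsto_eventually) (unfold eventually_sequentially, blast)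
  qed
  have "(\<lambda>n. integral\<^sup>L \<alpha> (s n)) \<longlonglongrightarrow> integral\<^sup>L \<alpha> (\<lambda>x. 0)"
    by (rule integral_dominated_convergence[OF _ ms ia lim]) (auto simp: s_def indicator_def)
  then have "(\<lambda>n. integral\<^sup>L \<alpha> (s n)) \<longlonglongrightarrow> 0" by simp
  then obtain n where "\<bar>integral\<^sup>L \<alpha> (s n)\<bar> < e" using e
    by (metis (no_types, lifting) LIMSEQ_D real_norm_def diff_zero order_refl)
  then show ?thesis by (intro exI[of _ "real (Suc n)"]) (auto simp: s_def)
qed

lemma quant_err:
  fixes \<alpha> :: "'a::euclidean_space measure"
  assumes a: "\<alpha> \<in> prob_measures" and ia: "integrable \<alpha> norm" and e: "e > 0"
  shows "\<exists>d R. d > 0 \<and> integrable \<alpha> (\<lambda>x. norm (x - qz d R x)) \<and> (\<integral>x. norm (x - qz d R x) \<partial>\<alpha>) \<le> e"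
proof -
  note A = prob_measuresD[OF a]
  interpret prob_space \<alpha> by (rule A(1))
  obtain R where R: "R > 0" "(\<integral>x. norm x * indicator {x. R < norm x} x \<partial>\<alpha>) < e/2"
    using tail_small[OF ia, of "e/2"] e by auto
  define d where "d = e / (2 * DIM('a))"
  have d: "d > 0" using e by (simp add: d_def)
  have Dd: "DIM('a) * d = e/2" by (simp add: d_def)
  have mn: "norm \<in> borel_measurable \<alpha>" using ia by auto
  have mq: "qz d R \<in> borel_measurable \<alpha>" using qz_meas measurable_cong_sets[OF A(2) refl] by blast
  have it: "integrable \<alpha> (\<lambda>x. norm x * indicator {x. R < norm x} x)"
    by (rule Bochner_Integration.integrable_bound[OF ia]) (use mn in \<open>auto simp: indicator_def\<close>)
  have ib: "integrable \<alpha> (\<lambda>x. DIM('a) * d + norm x * indicator {x. R < norm x} x)"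
    using it by simp
  have bnd: "norm (x - qz d R x) \<le> DIM('a) * d + norm x * indicator {x. R < norm x} x" for x :: 'a
  proof (cases "norm x \<le> R")
    case True then show ?thesis using qz_err[OF d True] by (simp add: indicator_def)
  next
    case False then show ?thesis using d by (simp add: qz_far indicator_def)
  qed
  have mid: "(\<lambda>x. x) \<in> borel_measurable \<alpha>" by (rule measurable_ident_sets) (simp add: A(2))
  have mqe: "(\<lambda>x. norm (x - qz d R x)) \<in> borel_measurable \<alpha>"
    using mq mid by measurable
  have iq: "integrable \<alpha> (\<lambda>x. norm (x - qz d R x))"
    by (rule Bochner_Integration.integrable_bound[OF ib mqe]) (use bnd in \<open>auto intro: order_trans[OF _ abs_ge_self]\<close>)
  have "(\<integral>x. norm (x - qz d R x) \<partial>\<alpha>) \<le> (\<integral>x. DIM('a) * d + norm x * indicator {x. R < norm x} x \<partial>\<alpha>)"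
    by (rule Bochner_Integration.integral_mono[OF iq ib bnd])
  also have "\<dots> = DIM('a) * d + (\<integral>x. norm x * indicator {x. R < norm x} x \<partial>\<alpha>)"
    using it by (subst Bochner_Integration.integral_add) (auto simp: prob_space)
  also have "\<dots> \<le> e" using R Dd by simp
  finally show ?thesis using d iq by blast
qed

lemma C1_meas:
  assumes "f \<in> C1"
  shows "f \<in> borel_measurable borel"
proof -
  have "continuous_on UNIV f" using assms by (auto simp: C1_def intro: lipschitz_on_continuous_on)
  then show ?thesis by (rule borel_measurable_continuous_onI)
qed

lemma C1_lip: "f \<in> C1 \<Longrightarrow> f x - f y \<le> norm (x - y)"
  using lipschitz_onD[of 1 UNIV f x y] by (auto simp: C1_def dist_norm dist_real_def)

lemma C1_integrable:
  fixes \<alpha> :: "'a::euclidean_space measure"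
  assumes f: "f \<in> C1" and a: "\<alpha> \<in> prob_measures" and ia: "integrable \<alpha> norm"
  shows "integrable \<alpha> f"
proof -
  note A = prob_measuresD[OF a]
  interpret prob_space \<alpha> by (rule A(1))
  have mf: "f \<in> borel_measurable \<alpha>" using C1_meas[OF f] measurable_cong_sets[OF A(2) refl] by blast
  have ib: "integrable \<alpha> (\<lambda>x. \<bar>f 0\<bar> + norm x)" using ia by simp
  show ?thesis
  proof (rule Bochner_Integration.integrable_bound[OF ib mf])
    show "AE x in \<alpha>. norm (f x) \<le> norm (\<bar>f 0\<bar> + norm x)"
    proof (rule AE_I2)
      fix x
      have "f x - f 0 \<le> norm x" "f 0 - f x \<le> norm x"
        using C1_lip[OF f, of x 0] C1_lip[OF f, of 0 x] by auto
      then show "norm (f x) \<le> norm (\<bar>f 0\<bar> + norm x)" by auto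
    qed
  qed
qed

lemma maxaff:
  fixes s :: "'k \<Rightarrow> 'a::euclidean_space" and c :: "'k \<Rightarrow> real"
  assumes K: "finite K" "K \<noteq> {}" and s: "\<And>k. k \<in> K \<Longrightarrow> norm (s k) \<le> 1"
  shows "(\<lambda>y. Max ((\<lambda>k. s k \<bullet> y + c k) ` K)) \<in> C1"
    and "\<And>k y. k \<in> K \<Longrightarrow> s k \<bullet> y + c k \<le> Max ((\<lambda>k. s k \<bullet> y + c k) ` K)"
    and "\<And>y. \<exists>k\<in>K. Max ((\<lambda>k. s k \<bullet> y + c k) ` K) = s k \<bullet> y + c k"
proof -
  define F where "F = (\<lambda>y. Max ((\<lambda>k. s k \<bullet> y + c k) ` K))"
  have ge: "s k \<bullet> y + c k \<le> F y" if "k \<in> K" for k y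
    unfolding F_def using K that by (intro Max_ge) auto
  have ex: "\<exists>k\<in>K. F y = s k \<bullet> y + c k" for y
  proof -
    have "F y \<in> (\<lambda>k. s k \<bullet> y + c k) ` K" unfolding F_def using K by (intro Max_in) auto
    then show ?thesis by auto
  qed
  have lip: "F x - F y \<le> norm (x - y)" for x y
  proof -
    obtain k where k: "k \<in> K" "F x = s k \<bullet> x + c k" using ex by blast
    have "s k \<bullet> (x - y) \<le> norm (s k) * norm (x - y)" by (rule order_trans[OF _ norm_cauchy_schwarz]) simp
    also have "\<dots> \<le> norm (x - y)" using s[OF k(1)] by (simp add: mult_left_le_one_le)
    finally have "s k \<bullet> x + c k \<le> s k \<bullet> y + c k + norm (x - y)" by (simp add: inner_diff_right)
    then show ?thesis using k ge[OF k(1), of y] by linarith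
  qed
  have cv: "convex_on UNIV F"
  proof (rule convex_onI)
    fix t :: real and x y :: 'a assume t: "t > 0" "t < 1"
    obtain k where k: "k \<in> K" "F ((1 - t) *\<^sub>R x + t *\<^sub>R y) = s k \<bullet> ((1 - t) *\<^sub>R x + t *\<^sub>R y) + c k"
      using ex by blast
    have "s k \<bullet> ((1 - t) *\<^sub>R x + t *\<^sub>R y) + c k = (1 - t) * (s k \<bullet> x + c k) + t * (s k \<bullet> y + c k)"
      by (simp add: inner_add_right algebra_simps)
    also have "\<dots> \<le> (1 - t) * F x + t * F y"
      using t ge[OF k(1)] by (intro add_mono mult_left_mono) auto
    finally show "F ((1 - t) *\<^sub>R x + t *\<^sub>R y) \<le> (1 - t) * F x + t * F y" using k by simp
  qed simp
  have "1-lipschitz_on UNIV F"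
  proof (rule lipschitz_onI)
    fix x y :: 'a
    show "dist (F x) (F y) \<le> 1 * dist x y"
      using lip[of x y] lip[of y x] by (simp add: dist_norm dist_real_def abs_le_iff norm_minus_commute)
  qed simp
  then show "(\<lambda>y. Max ((\<lambda>k. s k \<bullet> y + c k) ` K)) \<in> C1" using cv by (simp add: C1_def F_def)
  show "\<And>k y. k \<in> K \<Longrightarrow> s k \<bullet> y + c k \<le> Max ((\<lambda>k. s k \<bullet> y + c k) ` K)" using ge by (simp add: F_def)
  show "\<And>y. \<exists>k\<in>K. Max ((\<lambda>k. s k \<bullet> y + c k) ` K) = s k \<bullet> y + c k" using ex by (simp add: F_def)
qed

lemma finite_support_meas:
  fixes H :: "'a::euclidean_space \<Rightarrow> real"
  assumes "finite W" "\<And>z. z \<notin> W \<Longrightarrow> H z = 0"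
  shows "H \<in> borel_measurable borel"
proof -
  have "H = (\<lambda>z. \<Sum>w\<in>W. H w * indicator {w} z)"
  proof
    fix z
    show "H z = (\<Sum>w\<in>W. H w * indicator {w} z)"
      using assms by (cases "z \<in> W") (auto simp: indicator_def sum.delta' cong: sum.cong)
  qed
  also have "\<dots> \<in> borel_measurable borel" by measurable
  finally show ?thesis .
qed

lemma finite_range_bounded:
  fixes H :: "'b \<Rightarrow> real"
  assumes "finite (range H)"
  shows "\<exists>B. \<forall>z. \<bar>H z\<bar> \<le> B"
proof -
  have "\<forall>z. \<bar>H z\<bar> \<le> Max (abs ` range H)"
    using assms by (auto intro!: Max_ge)
  then show ?thesis by blast
qed

lemma distr_ident:
  fixes \<mu> :: "'a::euclidean_space measure"
  assumes "sets \<mu> = sets borel"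
  shows "distr \<mu> borel (\<lambda>x. x) = \<mu>"
proof (rule measure_eqI)
  show "sets (distr \<mu> borel (\<lambda>x. x)) = sets \<mu>" using assms by simp
  fix A assume "A \<in> sets (distr \<mu> borel (\<lambda>x. x))"
  then show "emeasure (distr \<mu> borel (\<lambda>x. x)) A = emeasure \<mu> A"
    using assms sets_eq_imp_space_eq[OF assms]
    by (subst emeasure_distr) (auto simp: measurable_ident_sets)
qed

lemma dirA:
  fixes \<mu> \<nu> :: "'a::euclidean_space measure"
  assumes mu: "\<mu> \<in> prob_measures" and nu: "\<nu> \<in> prob_measures"
    and im: "integrable \<mu> norm" and inu: "integrable \<nu> norm"
    and f: "f \<in> C1" and e: "e > 0"
  shows "\<exists>\<rho>\<in>P1. Ccost \<nu> \<rho> - Ccost \<mu> \<rho> \<le> (\<integral>x. f x \<partial>\<nu>) - (\<integral>x. f x \<partial>\<mu>) + e"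
proof -
  note M = prob_measuresD[OF mu] and N = prob_measuresD[OF nu]
  interpret mp: prob_space \<mu> by (rule M(1))
  obtain d R where d: "d > 0" and iq: "integrable \<mu> (\<lambda>x. norm (x - qz d R x))"
    and eq: "(\<integral>x. norm (x - qz d R x) \<partial>\<mu>) \<le> e/2"
    using quant_err[OF mu im, of "e/2"] e by auto
  define T where "T = (qz d R :: 'a \<Rightarrow> 'a)"
  have Tm: "T \<in> borel_measurable borel" by (simp add: T_def qz_meas)
  have Tmu: "T \<in> borel_measurable \<mu>" using Tm measurable_cong_sets[OF M(2) refl] by blast
  have Tfin: "finite (range T)" by (simp add: T_def qz_finite[OF d])
  define Xs where "Xs = range T"
  have Xs: "finite Xs" "Xs \<noteq> {}" by (auto simp: Xs_def Tfin)
  have TX: "T x \<in> Xs" for x by (simp add: Xs_def)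
  define a where "a = (\<lambda>j::'a. SOME g. norm g \<le> 1 \<and> (\<forall>y. f j + g \<bullet> (y - j) \<le> f y))"
  have a: "norm (a j) \<le> 1 \<and> (\<forall>y. f j + a j \<bullet> (y - j) \<le> f y)" for j
    unfolding a_def by (rule someI_ex) (use subgradient_exists f in \<open>auto simp: C1_def\<close>)
  define G where "G = (\<lambda>x. a (T x))"
  have Gm: "G \<in> borel_measurable borel" unfolding G_def by (rule finite_range_comp_meas[OF Tm Tfin]) simp
  have Gmu: "G \<in> borel_measurable \<mu>" using Gm measurable_cong_sets[OF M(2) refl] by blast
  have Gn: "norm (G x) \<le> 1" for x using a by (simp add: G_def)
  define \<rho> where "\<rho> = distr \<mu> borel G"
  have rho_prob: "\<rho> \<in> prob_measures"
    unfolding prob_measures_def \<rho>_def using mp.prob_space_distr[OF Gmu] by simp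
  have rhoP1: "\<rho> \<in> P1"
  proof -
    have "measure_support \<rho> \<subseteq> cball 0 1"
    proof
      fix x0 assume x0: "x0 \<in> measure_support \<rho>"
      show "x0 \<in> cball 0 1"
      proof (rule ccontr)
        assume "x0 \<notin> cball 0 1"
        then have r: "norm x0 - 1 > 0" by simp
        have "G x \<notin> ball x0 (norm x0 - 1)" for x
        proof -
          have "norm x0 \<le> norm (G x) + dist x0 (G x)" by (simp add: dist_norm norm_triangle_sub)
          then show ?thesis using Gn[of x] by (auto simp: mem_ball)
        qed
        then have "G -` ball x0 (norm x0 - 1) \<inter> space \<mu> = {}" by auto
        then have "emeasure \<rho> (ball x0 (norm x0 - 1)) = 0"
          unfolding \<rho>_def by (subst emeasure_distr[OF Gmu]) auto
        moreover have "emeasure \<rho> (ball x0 (norm x0 - 1)) > 0"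
          using x0 r unfolding measure_support_def by blast
        ultimately show False by simp
      qed
    qed
    then show ?thesis using rho_prob by (simp add: P1_def)
  qed
  define fn where "fn = (\<lambda>y. Max ((\<lambda>j. a j \<bullet> y + (f j - a j \<bullet> j)) ` Xs))"
  have fnC1: "fn \<in> C1" unfolding fn_def by (rule maxaff(1)[OF Xs]) (use a in blast)
  have fn_ge: "a j \<bullet> y + (f j - a j \<bullet> j) \<le> fn y" if "j \<in> Xs" for j y
    unfolding fn_def by (rule maxaff(2)[OF Xs _ that]) (use a in blast)
  have fn_le: "fn y \<le> f y" for y
  proof -
    obtain j where j: "j \<in> Xs" "fn y = a j \<bullet> y + (f j - a j \<bullet> j)"
      using maxaff(3)[OF Xs, where s=a and c="\<lambda>j. f j - a j \<bullet> j" and y=y] a unfolding fn_def by blast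
    have "f j + a j \<bullet> (y - j) \<le> f y" using a by blast
    then show ?thesis using j by (simp add: inner_diff_right)
  qed
  define hv where "hv = (\<lambda>z. Min ((\<lambda>j. a j \<bullet> j - f j) ` {j\<in>Xs. a j = z}))"
  define H where "H = (\<lambda>z. if z \<in> a ` Xs then hv z else 0)"
  have Hm: "H \<in> borel_measurable borel"
    by (rule finite_support_meas[of "a ` Xs"]) (auto simp: H_def Xs)
  have K2: "y \<bullet> z \<le> fn y + H z" if z: "z \<in> a ` Xs" for y z
  proof -
    have fin: "finite {j\<in>Xs. a j = z}" "{j\<in>Xs. a j = z} \<noteq> {}" using Xs z by auto
    have "hv z \<in> (\<lambda>j. a j \<bullet> j - f j) ` {j\<in>Xs. a j = z}" unfolding hv_def using fin by (intro Min_in) auto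
    then obtain j1 where j1: "j1 \<in> Xs" "a j1 = z" "hv z = a j1 \<bullet> j1 - f j1" by auto
    have "a j1 \<bullet> y + (f j1 - a j1 \<bullet> j1) \<le> fn y" by (rule fn_ge[OF j1(1)])
    then show ?thesis using j1 z by (simp add: H_def inner_commute)
  qed
  have K3: "H (G x) \<le> G x \<bullet> T x - f (T x)" for x
  proof -
    have fin: "finite {j\<in>Xs. a j = G x}" using Xs by auto
    have "G x \<in> a ` Xs" using TX by (auto simp: G_def)
    moreover have "hv (G x) \<le> a (T x) \<bullet> T x - f (T x)"
      unfolding hv_def using fin TX by (intro Min_le) (auto simp: G_def)
    ultimately show ?thesis by (simp add: H_def G_def)
  qed
  have Hfin: "finite (range H)"
  proof -
    have "range H \<subseteq> insert 0 (hv ` a ` Xs)" by (auto simp: H_def)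
    then show ?thesis using Xs by (meson finite_imageI finite_insert finite_subset)
  qed
  obtain BH where BH: "\<And>z. \<bar>H z\<bar> \<le> BH" using finite_range_bounded[OF Hfin] by blast
  have Hint: "integrable \<rho> H"
  proof -
    interpret rp: prob_space \<rho> using rho_prob by (simp add: prob_measures_def)
    show ?thesis
      by (rule rp.integrable_const_bound[where B=BH]) (use BH Hm in \<open>auto simp: \<rho>_def\<close>)
  qed
  have aeX: "AE z in \<rho>. z \<in> a ` Xs"
  proof -
    have cl: "{z. z \<in> a ` Xs} \<in> sets borel" using Xs by (simp add: finite_imp_closed)
    have "AE x in \<mu>. G x \<in> a ` Xs" using TX by (auto simp: G_def)
    then show ?thesis unfolding \<rho>_def using AE_distr_iff[OF Gmu, of "\<lambda>z. z \<in> a ` Xs"] cl by simp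
  qed
  have fnint: "integrable \<nu> fn" by (rule C1_integrable[OF fnC1 nu inu])
  have fint: "integrable \<nu> f" by (rule C1_integrable[OF f nu inu])
  have fmint: "integrable \<mu> f" by (rule C1_integrable[OF f mu im])
  have CN: "Ccost \<nu> \<rho> \<le> (\<integral>y. fn y \<partial>\<nu>) + (\<integral>x. H (G x) \<partial>\<mu>)"
  proof (rule Ccost_le[OF nu rhoP1 inu])
    fix \<gamma> assume cp: "\<gamma> \<in> couplings \<nu> \<rho>"
    have i1: "integrable \<gamma> (\<lambda>z. fst z \<bullet> snd z)" by (rule cp_inner_bound(1)[OF cp rhoP1 inu])
    have i2: "integrable \<gamma> (\<lambda>z. fn (fst z))" using cp_int_fst(2)[OF cp C1_meas[OF fnC1]] fnint by simp
    have i3: "integrable \<gamma> (\<lambda>z. H (snd z))" using cp_int_snd(2)[OF cp Hm] Hint by simp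
    have ae: "AE z in \<gamma>. snd z \<in> a ` Xs"
      by (rule cp_AE_snd[OF cp aeX]) (use Xs in \<open>simp add: finite_imp_closed\<close>)
    have "(\<integral>z. fst z \<bullet> snd z \<partial>\<gamma>) \<le> (\<integral>z. fn (fst z) + H (snd z) \<partial>\<gamma>)"
      by (rule integral_mono_AE[OF i1 Bochner_Integration.integrable_add[OF i2 i3]]) (use ae K2 in auto)
    also have "\<dots> = (\<integral>z. fn (fst z) \<partial>\<gamma>) + (\<integral>z. H (snd z) \<partial>\<gamma>)"
      by (rule Bochner_Integration.integral_add[OF i2 i3])
    also have "\<dots> = (\<integral>y. fn y \<partial>\<nu>) + (\<integral>z. H z \<partial>\<rho>)"
      using cp_int_fst(1)[OF cp C1_meas[OF fnC1]] cp_int_snd(1)[OF cp Hm] by simp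
    also have "(\<integral>z. H z \<partial>\<rho>) = (\<integral>x. H (G x) \<partial>\<mu>)"
      unfolding \<rho>_def by (rule integral_distr[OF Gmu Hm])
    finally show "(\<integral>z. fst z \<bullet> snd z \<partial>\<gamma>) \<le> (\<integral>y. fn y \<partial>\<nu>) + (\<integral>x. H (G x) \<partial>\<mu>)" .
  qed
  have iHG: "integrable \<mu> (\<lambda>x. H (G x))"
    unfolding G_def by (rule integral_finite_range(1)[OF Tmu Tfin]) (rule mp.finite_measure_axioms)
  have iGT: "integrable \<mu> (\<lambda>x. G x \<bullet> T x - f (T x))"
    unfolding G_def by (rule integral_finite_range(1)[OF Tmu Tfin, of "\<lambda>j. a j \<bullet> j - f j"]) (rule mp.finite_measure_axioms)
  have IHG: "(\<integral>x. H (G x) \<partial>\<mu>) \<le> (\<integral>x. G x \<bullet> T x - f (T x) \<partial>\<mu>)"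
    by (rule Bochner_Integration.integral_mono[OF iHG iGT K3])
  have idm: "(\<lambda>x. x) \<in> borel_measurable \<mu>" by (rule measurable_ident_sets) (simp add: M(2))
  define \<pi>0 where "\<pi>0 = distr \<mu> (borel \<Otimes>\<^sub>M borel) (\<lambda>x. (x, G x))"
  have Pm: "(\<lambda>x. (x, G x)) \<in> measurable \<mu> (borel \<Otimes>\<^sub>M borel)"
    by (rule measurable_Pair[OF idm Gmu])
  have cp0: "\<pi>0 \<in> couplings \<mu> \<rho>"
  proof -
    have "distr \<pi>0 borel fst = distr \<mu> borel (fst \<circ> (\<lambda>x. (x, G x)))"
      unfolding \<pi>0_def by (rule distr_distr[OF measurable_fst Pm])
    also have "\<dots> = distr \<mu> borel (\<lambda>x. x)" by (simp add: comp_def)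
    also have "\<dots> = \<mu>" by (rule distr_ident[OF M(2)])
    finally have d1: "distr \<pi>0 borel fst = \<mu>" .
    have "distr \<pi>0 borel snd = distr \<mu> borel (snd \<circ> (\<lambda>x. (x, G x)))"
      unfolding \<pi>0_def by (rule distr_distr[OF measurable_snd Pm])
    also have "\<dots> = \<rho>" by (simp add: comp_def \<rho>_def)
    finally have d2: "distr \<pi>0 borel snd = \<rho>" .
    show ?thesis unfolding couplings_def using d1 d2 mp.prob_space_distr[OF Pm] by (simp add: \<pi>0_def)
  qed
  have iIx: "(\<integral>z. fst z \<bullet> snd z \<partial>\<pi>0) = (\<integral>x. x \<bullet> G x \<partial>\<mu>)"
    unfolding \<pi>0_def by (subst integral_distr[OF Pm]) simp_all
  have CM: "(\<integral>x. x \<bullet> G x \<partial>\<mu>) \<le> Ccost \<mu> \<rho>"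
    using Ccost_ge[OF mu rhoP1 im cp0] iIx by simp
  have ixG: "integrable \<mu> (\<lambda>x. x \<bullet> G x)"
  proof (rule Bochner_Integration.integrable_bound[OF im])
    show "(\<lambda>x. x \<bullet> G x) \<in> borel_measurable \<mu>" using idm Gmu by (rule borel_measurable_inner)
    show "AE x in \<mu>. norm (x \<bullet> G x) \<le> norm (norm x)"
    proof (rule AE_I2)
      fix x
      have "\<bar>x \<bullet> G x\<bar> \<le> norm x * norm (G x)" by (rule Cauchy_Schwarz_ineq2)
      also have "\<dots> \<le> norm x" using Gn[of x] by (simp add: mult_left_le)
      finally show "norm (x \<bullet> G x) \<le> norm (norm x)" by simp
    qed
  qed
  have fnf: "(\<integral>y. fn y \<partial>\<nu>) \<le> (\<integral>y. f y \<partial>\<nu>)"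
    by (rule Bochner_Integration.integral_mono[OF fnint fint fn_le])
  have pt: "G x \<bullet> T x - f (T x) - x \<bullet> G x \<le> 2 * norm (x - T x) - f x" for x
  proof -
    have "G x \<bullet> (T x - x) \<le> norm (G x) * norm (T x - x)" by (rule order_trans[OF _ norm_cauchy_schwarz]) simp
    also have "\<dots> \<le> norm (x - T x)" using Gn[of x] by (simp add: mult_left_le_one_le norm_minus_commute)
    finally have "G x \<bullet> (T x - x) \<le> norm (x - T x)" .
    moreover have "f x - f (T x) \<le> norm (x - T x)" by (rule C1_lip[OF f])
    ultimately show ?thesis by (simp add: inner_diff_right inner_commute)
  qed
  have iq': "integrable \<mu> (\<lambda>x. 2 * norm (x - T x) - f x)"
    using iq fmint by (simp add: T_def)
  have "(\<integral>x. G x \<bullet> T x - f (T x) \<partial>\<mu>) - (\<integral>x. x \<bullet> G x \<partial>\<mu>) = (\<integral>x. G x \<bullet> T x - f (T x) - x \<bullet> G x \<partial>\<mu>)"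
    by (rule Bochner_Integration.integral_diff[OF iGT ixG, symmetric])
  also have "\<dots> \<le> (\<integral>x. 2 * norm (x - T x) - f x \<partial>\<mu>)"
    by (rule Bochner_Integration.integral_mono[OF Bochner_Integration.integrable_diff[OF iGT ixG] iq' pt])
  also have "\<dots> = 2 * (\<integral>x. norm (x - T x) \<partial>\<mu>) - (\<integral>x. f x \<partial>\<mu>)"
    using iq fmint by (simp add: T_def)
  finally have fin: "(\<integral>x. G x \<bullet> T x - f (T x) \<partial>\<mu>) - (\<integral>x. x \<bullet> G x \<partial>\<mu>) \<le> 2 * (\<integral>x. norm (x - T x) \<partial>\<mu>) - (\<integral>x. f x \<partial>\<mu>)" .
  have "Ccost \<nu> \<rho> - Ccost \<mu> \<rho> \<le> (\<integral>x. f x \<partial>\<nu>) - (\<integral>x. f x \<partial>\<mu>) + e"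
    using CN CM IHG fnf fin eq by (simp add: T_def)
  then show ?thesis using rhoP1 by blast
qed

definition tplans :: "'a set \<Rightarrow> 'a set \<Rightarrow> ('a \<Rightarrow> real) \<Rightarrow> ('a \<Rightarrow> real) \<Rightarrow> ('a \<times> 'a \<Rightarrow> real) set" where
  "tplans J I nu rho = {p. (\<forall>k. k \<notin> J \<times> I \<longrightarrow> p k = 0) \<and> (\<forall>k. 0 \<le> p k)
      \<and> (\<forall>j\<in>J. (\<Sum>i\<in>I. p (j,i)) = nu j) \<and> (\<forall>i\<in>I. (\<Sum>j\<in>J. p (j,i)) = rho i)}"

definition tobj :: "'a::real_inner set \<Rightarrow> 'a set \<Rightarrow> ('a \<times> 'a \<Rightarrow> real) \<Rightarrow> real" where
  "tobj J I p = (\<Sum>k\<in>J \<times> I. p k * (fst k \<bullet> snd k))"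

lemma tplans_le_nu:
  assumes "p \<in> tplans J I nu rho" "finite I" "j \<in> J" "i \<in> I" "finite J"
  shows "p (j,i) \<le> nu j" "p (j,i) \<le> rho i"
proof -
  have nn: "\<forall>k. 0 \<le> p k" using assms(1) by (simp add: tplans_def)
  show "p (j,i) \<le> nu j"
  proof -
    have "p (j,i) \<le> (\<Sum>i'\<in>I. p (j,i'))" using assms nn by (intro member_le_sum) auto
    then show ?thesis using assms by (simp add: tplans_def)
  qed
  show "p (j,i) \<le> rho i"
  proof -
    have "finite J" using assms by simp
    have "p (j,i) \<le> (\<Sum>j'\<in>J. p (j',i))" using assms nn \<open>finite J\<close> by (intro member_le_sum) auto
    then show ?thesis using assms by (simp add: tplans_def)
  qed
qed

lemma cont_coord: "continuous_on UNIV (\<lambda>p::'b \<Rightarrow> real. p k)"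
  by (rule continuous_on_product_coordinates)

lemma lp_max:
  fixes J I :: "'a::euclidean_space set"
  assumes J: "finite J" and I: "finite I" and ne: "tplans J I nu rho \<noteq> {}"
  shows "\<exists>p\<in>tplans J I nu rho. \<forall>q\<in>tplans J I nu rho. tobj J I q \<le> tobj J I p"
proof (rule continuous_attains_sup[OF _ ne])
  define P where "P = tplans J I nu rho"
  define BX where "BX = Pi UNIV (\<lambda>k::'a\<times>'a. if k \<in> J \<times> I then {0..nu (fst k)} else {0})"
  have "compactin (product_topology (\<lambda>_. euclidean) UNIV) (PiE UNIV (\<lambda>k::'a\<times>'a. if k \<in> J \<times> I then {0..nu (fst k)} else {0::real}))"
    by (subst compactin_PiE) auto
  then have cBX: "compact BX" unfolding BX_def by (simp add: PiE_UNIV_domain euclidean_product_topology)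
  have sub: "P \<subseteq> BX"
  proof
    fix p assume p: "p \<in> P"
    show "p \<in> BX" unfolding BX_def
    proof (intro Pi_I)
      fix k :: "'a \<times> 'a"
      show "p k \<in> (if k \<in> J \<times> I then {0..nu (fst k)} else {0})"
      proof (cases "k \<in> J \<times> I")
        case True
        then obtain j i where k: "k = (j,i)" "j \<in> J" "i \<in> I" by auto
        then show ?thesis using p tplans_le_nu(1)[of p J I nu rho j i] I J by (auto simp: P_def tplans_def)
      next
        case False then show ?thesis using p by (cases k) (auto simp: P_def tplans_def)
      qed
    qed
  qed
  have eqP: "P = (\<Inter>k\<in>-(J\<times>I). {p. p k = 0}) \<inter> (\<Inter>k. {p. 0 \<le> p k})
      \<inter> (\<Inter>j\<in>J. {p. (\<Sum>i\<in>I. p (j,i)) = nu j}) \<inter> (\<Inter>i\<in>I. {p. (\<Sum>j\<in>J. p (j,i)) = rho i})"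
    by (auto simp: P_def tplans_def)
  have cs: "continuous_on UNIV (\<lambda>p::'a\<times>'a \<Rightarrow> real. \<Sum>i\<in>I. p (j,i))" for j
    by (intro continuous_on_sum cont_coord)
  have cs2: "continuous_on UNIV (\<lambda>p::'a\<times>'a \<Rightarrow> real. \<Sum>j\<in>J. p (j,i))" for i
    by (intro continuous_on_sum cont_coord)
  have "closed P" unfolding eqP
    by (intro closed_Int closed_INT ballI closed_Collect_eq closed_Collect_le cont_coord cs cs2 continuous_on_const)
  then have "compact (P \<inter> BX)" using cBX by (rule closed_Int_compact)
  moreover have "P \<inter> BX = P" using sub by auto
  ultimately show "compact (tplans J I nu rho)" by (simp add: P_def)
  show "continuous_on (tplans J I nu rho) (tobj J I)"
    unfolding tobj_def
    by (intro continuous_on_sum continuous_on_mult_right continuous_on_subset[OF cont_coord]) auto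
qed

lemma sum_of_bool_eq:
  fixes g :: "'b \<Rightarrow> real"
  assumes "finite A" "a \<in> A"
  shows "(\<Sum>x\<in>A. of_bool (x = a) * g x) = g a"
proof -
  have "(\<Sum>x\<in>A. of_bool (x = a) * g x) = (\<Sum>x\<in>A. if x = a then g x else 0)"
    by (intro sum.cong) auto
  then show ?thesis using assms by (simp add: sum.delta')
qed

lemma card_one_sum:
  fixes P :: "nat \<Rightarrow> bool"
  shows "(\<Sum>l<k. (of_bool (P l) :: real)) = real (card {l. l < k \<and> P l})"
proof -
  have e: "{l. l < k \<and> P l} = {l\<in>{..<k}. P l}" by auto
  have "(\<Sum>l<k. (of_bool (P l) :: real)) = (\<Sum>l\<in>{l. l < k \<and> P l}. 1)"
    unfolding e by (subst sum.inter_filter) (auto simp: of_bool_def)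
  then show ?thesis by simp
qed

lemma cyc:
  fixes J I :: "'a::euclidean_space set"
  assumes J: "finite J" and I: "finite I" and pP: "p \<in> tplans J I nu rho"
    and opt: "\<forall>q\<in>tplans J I nu rho. tobj J I q \<le> tobj J I p"
    and k: "k > 0" and inj: "inj_on cs {..<k}" and csI: "\<And>l. l < k \<Longrightarrow> cs l \<in> I"
    and js: "\<And>l. l < k \<Longrightarrow> js l \<in> J \<and> p (js l, cs l) > 0"
  shows "(\<Sum>l<k. js l \<bullet> (cs (Suc l mod k) - cs l)) \<le> 0"
proof (rule ccontr)
  define W where "W = (\<Sum>l<k. js l \<bullet> (cs (Suc l mod k) - cs l))"
  assume "\<not> (\<Sum>l<k. js l \<bullet> (cs (Suc l mod k) - cs l)) \<le> 0"
  then have W: "W > 0" by (simp add: W_def)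
  have pz: "\<And>x. x \<notin> J \<times> I \<Longrightarrow> p x = 0" and pnn: "\<And>x. 0 \<le> p x"
    and prow: "\<And>j. j \<in> J \<Longrightarrow> (\<Sum>i\<in>I. p (j,i)) = nu j"
    and pcol: "\<And>i. i \<in> I \<Longrightarrow> (\<Sum>j\<in>J. p (j,i)) = rho i"
    using pP by (auto simp: tplans_def)
  define eps where "eps = Min ((\<lambda>l. p (js l, cs l)) ` {..<k})"
  have eps_le: "eps \<le> p (js l, cs l)" if "l < k" for l
    unfolding eps_def using that by (intro Min_le) auto
  have eps_pos: "eps > 0"
  proof -
    have "eps \<in> (\<lambda>l. p (js l, cs l)) ` {..<k}" unfolding eps_def using k by (intro Min_in) auto
    then show ?thesis using js by auto
  qed
  have sk: "Suc l mod k < k" for l using k by simp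
  define D1 where "D1 = (\<lambda>x. \<Sum>l<k. (of_bool (x = (js l, cs (Suc l mod k))) :: real))"
  define D2 where "D2 = (\<lambda>x. \<Sum>l<k. (of_bool (x = (js l, cs l)) :: real))"
  define q where "q = (\<lambda>x. p x + eps * (D1 x - D2 x))"
  have D1nn: "0 \<le> D1 x" for x unfolding D1_def by (intro sum_nonneg) auto
  have D2cases: "D2 x = 0 \<or> (D2 x = 1 \<and> eps \<le> p x)" for x
  proof (cases "\<exists>l0<k. x = (js l0, cs l0)")
    case True
    then obtain l0 where l0: "l0 < k" "x = (js l0, cs l0)" by auto
    have "{l. l < k \<and> x = (js l, cs l)} = {l0}"
      using l0 inj by (auto simp: inj_on_def)
    then have "D2 x = 1" unfolding D2_def by (subst card_one_sum) simp
    then show ?thesis using eps_le[OF l0(1)] l0 by auto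
  next
    case False
    then have "D2 x = 0" unfolding D2_def by (intro sum.neutral) auto
    then show ?thesis by simp
  qed
  have q_out: "q x = 0" if "x \<notin> J \<times> I" for x
  proof -
    have "D1 x = 0" unfolding D1_def using that js csI sk by (intro sum.neutral) auto
    moreover have "D2 x = 0" unfolding D2_def using that js csI by (intro sum.neutral) auto
    ultimately show ?thesis using pz[OF that] by (simp add: q_def)
  qed
  have q_nn: "0 \<le> q x" for x
  proof -
    have qe: "q x = p x + eps * D1 x - eps * D2 x" by (simp add: q_def algebra_simps)
    have "0 \<le> eps * D1 x" using eps_pos D1nn[of x] by simp
    then show ?thesis using D2cases[of x] pnn[of x] qe by auto
  qed
  have rowD1: "(\<Sum>i\<in>I. D1 (j,i)) = (\<Sum>l<k. of_bool (j = js l))" if "j \<in> J" for j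
    unfolding D1_def
  proof (subst sum.swap, intro sum.cong refl)
    fix l assume "l \<in> {..<k}"
    then have "cs (Suc l mod k) \<in> I" using csI sk by auto
    then show "(\<Sum>i\<in>I. (of_bool ((j, i) = (js l, cs (Suc l mod k))) :: real)) = of_bool (j = js l)"
      using I by (cases "j = js l") (auto simp: of_bool_def sum.delta')
  qed
  have rowD2: "(\<Sum>i\<in>I. D2 (j,i)) = (\<Sum>l<k. of_bool (j = js l))" if "j \<in> J" for j
    unfolding D2_def
  proof (subst sum.swap, intro sum.cong refl)
    fix l assume "l \<in> {..<k}"
    then have "cs l \<in> I" using csI by auto
    then show "(\<Sum>i\<in>I. (of_bool ((j, i) = (js l, cs l)) :: real)) = of_bool (j = js l)"
      using I by (cases "j = js l") (auto simp: of_bool_def sum.delta')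
  qed
  have colD1: "(\<Sum>j\<in>J. D1 (j,i)) = (\<Sum>l<k. of_bool (i = cs (Suc l mod k)))" if "i \<in> I" for i
    unfolding D1_def
  proof (subst sum.swap, intro sum.cong refl)
    fix l assume "l \<in> {..<k}"
    then have "js l \<in> J" using js by auto
    then show "(\<Sum>j\<in>J. (of_bool ((j, i) = (js l, cs (Suc l mod k))) :: real)) = of_bool (i = cs (Suc l mod k))"
      using J by (cases "i = cs (Suc l mod k)") (auto simp: of_bool_def sum.delta')
  qed
  have colD2: "(\<Sum>j\<in>J. D2 (j,i)) = (\<Sum>l<k. of_bool (i = cs l))" if "i \<in> I" for i
    unfolding D2_def
  proof (subst sum.swap, intro sum.cong refl)
    fix l assume "l \<in> {..<k}"
    then have "js l \<in> J" using js by auto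
    then show "(\<Sum>j\<in>J. (of_bool ((j, i) = (js l, cs l)) :: real)) = of_bool (i = cs l)"
      using J by (cases "i = cs l") (auto simp: of_bool_def sum.delta')
  qed
  have bij: "bij_betw (\<lambda>l. Suc l mod k) {..<k} {..<k}"
  proof -
    have "inj_on (\<lambda>l. Suc l mod k) {..<k}"
    proof (rule inj_onI)
      fix x y assume xy: "x \<in> {..<k}" "y \<in> {..<k}" "Suc x mod k = Suc y mod k"
      then show "x = y"
        by (metis lessThan_iff mod_Suc nat.inject less_Suc_eq_le Suc_lessI le_neq_implies_less nat_neq_iff old.nat.distinct(1) mod_less) 
    qed
    moreover have "(\<lambda>l. Suc l mod k) ` {..<k} \<subseteq> {..<k}" using sk by auto
    ultimately show ?thesis by (simp add: bij_betw_def endo_inj_surj)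
  qed
  have reidx: "(\<Sum>l<k. (of_bool (i = cs (Suc l mod k)) :: real)) = (\<Sum>l<k. of_bool (i = cs l))" for i
    using sum.reindex_bij_betw[OF bij, of "\<lambda>l. (of_bool (i = cs l) :: real)"] by simp
  have qP: "q \<in> tplans J I nu rho"
  proof -
    have "(\<Sum>i\<in>I. q (j,i)) = nu j" if "j \<in> J" for j
    proof -
      have "(\<Sum>i\<in>I. q (j,i)) = (\<Sum>i\<in>I. p (j,i)) + eps * ((\<Sum>i\<in>I. D1 (j,i)) - (\<Sum>i\<in>I. D2 (j,i)))"
        by (simp add: q_def sum.distrib sum_distrib_left sum_subtractf right_diff_distrib)
      then show ?thesis using rowD1[OF that] rowD2[OF that] prow[OF that] by simp
    qed
    moreover have "(\<Sum>j\<in>J. q (j,i)) = rho i" if "i \<in> I" for i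
    proof -
      have "(\<Sum>j\<in>J. q (j,i)) = (\<Sum>j\<in>J. p (j,i)) + eps * ((\<Sum>j\<in>J. D1 (j,i)) - (\<Sum>j\<in>J. D2 (j,i)))"
        by (simp add: q_def sum.distrib sum_distrib_left sum_subtractf right_diff_distrib)
      then show ?thesis using colD1[OF that] colD2[OF that] pcol[OF that] reidx by simp
    qed
    ultimately show ?thesis using q_out q_nn by (auto simp: tplans_def)
  qed
  have objD1: "(\<Sum>x\<in>J \<times> I. D1 x * (fst x \<bullet> snd x)) = (\<Sum>l<k. js l \<bullet> cs (Suc l mod k))"
    unfolding D1_def
  proof (simp only: sum_distrib_right, subst sum.swap, intro sum.cong refl)
    fix l assume "l \<in> {..<k}"
    then have "(js l, cs (Suc l mod k)) \<in> J \<times> I" using js csI sk by auto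
    then show "(\<Sum>x\<in>J \<times> I. of_bool (x = (js l, cs (Suc l mod k))) * (fst x \<bullet> snd x)) = js l \<bullet> cs (Suc l mod k)"
      using J I by (subst sum_of_bool_eq) auto
  qed
  have objD2: "(\<Sum>x\<in>J \<times> I. D2 x * (fst x \<bullet> snd x)) = (\<Sum>l<k. js l \<bullet> cs l)"
    unfolding D2_def
  proof (simp only: sum_distrib_right, subst sum.swap, intro sum.cong refl)
    fix l assume "l \<in> {..<k}"
    then have "(js l, cs l) \<in> J \<times> I" using js csI by auto
    then show "(\<Sum>x\<in>J \<times> I. of_bool (x = (js l, cs l)) * (fst x \<bullet> snd x)) = js l \<bullet> cs l"
      using J I by (subst sum_of_bool_eq) auto
  qed
  have "tobj J I q = tobj J I p + eps * ((\<Sum>x\<in>J \<times> I. D1 x * (fst x \<bullet> snd x)) - (\<Sum>x\<in>J \<times> I. D2 x * (fst x \<bullet> snd x)))"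
    unfolding tobj_def q_def
    by (simp add: algebra_simps sum.distrib sum_distrib_left sum_subtractf)
  also have "(\<Sum>x\<in>J \<times> I. D1 x * (fst x \<bullet> snd x)) - (\<Sum>x\<in>J \<times> I. D2 x * (fst x \<bullet> snd x)) = W"
    unfolding objD1 objD2 W_def by (simp add: sum_subtractf inner_diff_right)
  finally have "tobj J I q = tobj J I p + eps * W" .
  moreover have "eps * W > 0" using eps_pos W by simp
  ultimately have "tobj J I q > tobj J I p" by simp
  with opt qP show False by auto
qed

definition Ip :: "'a set \<Rightarrow> 'a set \<Rightarrow> ('a \<times> 'a \<Rightarrow> real) \<Rightarrow> 'a set" where
  "Ip J I p = {i\<in>I. \<exists>j\<in>J. p (j,i) > 0}"

definition wgt :: "'a::real_inner set \<Rightarrow> ('a \<times> 'a \<Rightarrow> real) \<Rightarrow> 'a \<Rightarrow> 'a \<Rightarrow> real" where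
  "wgt J p i t = Max ((\<lambda>j. j \<bullet> (t - i)) ` {j\<in>J. p (j,i) > 0})"

fun pw :: "('a \<Rightarrow> 'a \<Rightarrow> real) \<Rightarrow> 'a list \<Rightarrow> real" where
  "pw w (x # y # r) = w x y + pw w (y # r)"
| "pw w _ = 0"

lemma pw_append: "pw w (xs @ y # ys) = pw w (xs @ [y]) + pw w (y # ys)"
proof (induction xs)
  case Nil then show ?case by simp
next
  case (Cons x xs)
  then show ?case by (cases xs) auto
qed

lemma pw_nth: "pw w xs = (\<Sum>l<length xs - 1. w (xs ! l) (xs ! Suc l))"
proof (induction w xs rule: pw.induct)
  case (1 w x y r)
  have "(\<Sum>l<length (x # y # r) - 1. w ((x # y # r) ! l) ((x # y # r) ! Suc l))
      = (\<Sum>l<Suc (length r). w ((x # y # r) ! l) ((x # y # r) ! Suc l))" by simp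
  also have "\<dots> = w x y + (\<Sum>l<length r. w ((y # r) ! l) ((y # r) ! Suc l))"
    by (subst sum.lessThan_Suc_shift) simp
  finally show ?case using 1 by simp
qed auto

lemma cyc_list:
  fixes J I :: "'a::euclidean_space set"
  assumes J: "finite J" and I: "finite I" and pP: "p \<in> tplans J I nu rho"
    and opt: "\<forall>q\<in>tplans J I nu rho. tobj J I q \<le> tobj J I p"
    and ne: "cs \<noteq> []" and dist: "distinct cs" and sub: "set cs \<subseteq> Ip J I p"
  shows "pw (wgt J p) cs + wgt J p (last cs) (hd cs) \<le> 0"
proof -
  define k where "k = length cs"
  have k: "k > 0" using ne by (simp add: k_def)
  have sk: "Suc l mod k < k" for l using k by simp
  have csIp: "cs ! l \<in> Ip J I p" if "l < k" for l using sub that by (auto simp: k_def)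
  have ex: "\<exists>j. (j \<in> J \<and> p (j, cs ! l) > 0) \<and> j \<bullet> (cs ! (Suc l mod k) - cs ! l) = wgt J p (cs ! l) (cs ! (Suc l mod k))"
    if "l < k" for l
  proof -
    have "{j\<in>J. p (j, cs ! l) > 0} \<noteq> {}" using csIp[OF that] by (auto simp: Ip_def)
    then have "wgt J p (cs ! l) (cs ! (Suc l mod k)) \<in> (\<lambda>j. j \<bullet> (cs ! (Suc l mod k) - cs ! l)) ` {j\<in>J. p (j, cs ! l) > 0}"
      unfolding wgt_def using J by (intro Max_in) auto
    then show ?thesis by auto
  qed
  define js where "js = (\<lambda>l. SOME j. (j \<in> J \<and> p (j, cs ! l) > 0) \<and> j \<bullet> (cs ! (Suc l mod k) - cs ! l) = wgt J p (cs ! l) (cs ! (Suc l mod k)))"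
  have js: "(js l \<in> J \<and> p (js l, cs ! l) > 0) \<and> js l \<bullet> (cs ! (Suc l mod k) - cs ! l) = wgt J p (cs ! l) (cs ! (Suc l mod k))"
    if "l < k" for l
    unfolding js_def by (rule someI_ex[OF ex[OF that]])
  have inj: "inj_on (\<lambda>l. cs ! l) {..<k}" using dist by (simp add: inj_on_def k_def nth_eq_iff_index_eq)
  have csI: "cs ! l \<in> I" if "l < k" for l using csIp[OF that] by (simp add: Ip_def)
  have "(\<Sum>l<k. js l \<bullet> (cs ! (Suc l mod k) - cs ! l)) \<le> 0"
    by (rule cyc[OF J I pP opt k inj, of js]) (use csI js in auto)
  moreover have "(\<Sum>l<k. js l \<bullet> (cs ! (Suc l mod k) - cs ! l)) = (\<Sum>l<k. wgt J p (cs ! l) (cs ! (Suc l mod k)))"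
    using js by (intro sum.cong) auto
  moreover have "(\<Sum>l<k. wgt J p (cs ! l) (cs ! (Suc l mod k))) = pw (wgt J p) cs + wgt J p (last cs) (hd cs)"
  proof -
    obtain m where m: "k = Suc m" using k by (cases k) auto
    have "(\<Sum>l<k. wgt J p (cs ! l) (cs ! (Suc l mod k))) = (\<Sum>l<m. wgt J p (cs ! l) (cs ! (Suc l mod k))) + wgt J p (cs ! m) (cs ! 0)"
      by (simp add: m)
    also have "(\<Sum>l<m. wgt J p (cs ! l) (cs ! (Suc l mod k))) = (\<Sum>l<m. wgt J p (cs ! l) (cs ! Suc l))"
      by (intro sum.cong) (auto simp: m)
    also have "\<dots> = pw (wgt J p) cs" by (simp add: pw_nth k_def[symmetric] m)
    also have "cs ! m = last cs" using ne m by (simp add: last_conv_nth k_def)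
    also have "cs ! 0 = hd cs" using ne by (simp add: hd_conv_nth)
    finally show ?thesis .
  qed
  ultimately show ?thesis by simp
qed

lemma potentials:
  fixes J I :: "'a::euclidean_space set"
  assumes J: "finite J" and I: "finite I" and pP: "p \<in> tplans J I nu rho"
    and opt: "\<forall>q\<in>tplans J I nu rho. tobj J I q \<le> tobj J I p"
  shows "\<exists>h. \<forall>j i t. p (j,i) > 0 \<longrightarrow> j \<bullet> t - h t \<le> j \<bullet> i - h i"
proof -
  define w where "w = wgt J p"
  define Ipp where "Ipp = Ip J I p"
  have Ippf: "finite Ipp" using I by (simp add: Ipp_def Ip_def)
  define Paths where "Paths = (\<lambda>t. {xs. distinct xs \<and> set xs \<subseteq> Ipp \<and> t \<notin> set xs})"
  have Pf: "finite (Paths t)" for t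
  proof -
    have "Paths t \<subseteq> {xs. set xs \<subseteq> Ipp \<and> length xs \<le> card Ipp}"
    proof
      fix xs assume "xs \<in> Paths t"
      then have d: "distinct xs" and s: "set xs \<subseteq> Ipp" unfolding Paths_def by blast+
      have "length xs = card (set xs)" using distinct_card[OF d] by simp
      also have "\<dots> \<le> card Ipp" by (rule card_mono[OF Ippf s])
      finally have l: "length xs \<le> card Ipp" .
      show "xs \<in> {xs. set xs \<subseteq> Ipp \<and> length xs \<le> card Ipp}" using s l by blast
    qed
    moreover have "finite {xs. set xs \<subseteq> Ipp \<and> length xs \<le> card Ipp}" by (rule finite_lists_length_le[OF Ippf])
    ultimately show ?thesis by (rule finite_subset)
  qed
  have Pne: "[] \<in> Paths t" for t by (simp add: Paths_def)
  define h where "h = (\<lambda>t. Max ((\<lambda>xs. pw w (xs @ [t])) ` Paths t))"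
  have h_ge: "pw w (xs @ [t]) \<le> h t" if "xs \<in> Paths t" for xs t
    unfolding h_def using Pf that by (intro Max_ge) auto
  have key: "h i + w i t \<le> h t" if iI: "i \<in> Ipp" for i t
  proof -
    have "h i \<in> (\<lambda>xs. pw w (xs @ [i])) ` Paths i" unfolding h_def using Pf Pne by (intro Max_in) auto
    then obtain xs where xs: "xs \<in> Paths i" "h i = pw w (xs @ [i])" by auto
    have xsd: "distinct xs" "set xs \<subseteq> Ipp" "i \<notin> set xs" using xs(1) by (auto simp: Paths_def)
    show ?thesis
    proof (cases "t = i")
      case True
      have "{j\<in>J. p (j,i) > 0} \<noteq> {}" using iI by (auto simp: Ipp_def Ip_def)
      then have "w i i = 0" unfolding w_def wgt_def using J by simp
      then show ?thesis using True by simp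
    next
      case tne: False
      show ?thesis
      proof (cases "t \<in> set xs")
        case False
        have "xs @ [i] \<in> Paths t" using xsd iI False tne by (auto simp: Paths_def)
        then have "pw w ((xs @ [i]) @ [t]) \<le> h t" by (rule h_ge)
        moreover have "pw w ((xs @ [i]) @ [t]) = pw w (xs @ [i]) + w i t"
          using pw_append[of w xs i "[t]"] by simp
        ultimately show ?thesis using xs by simp
      next
        case True
        then obtain as bs where asbs: "xs = as @ t # bs" by (meson split_list)
        have e1: "pw w (xs @ [i]) = pw w (as @ [t]) + pw w (t # bs @ [i])"
          using pw_append[of w as t "bs @ [i]"] asbs by simp
        have "pw w (t # bs @ [i]) + w (last (t # bs @ [i])) (hd (t # bs @ [i])) \<le> 0"
          unfolding w_def
        proof (rule cyc_list[OF J I pP opt])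
          show "distinct (t # bs @ [i])" using xsd asbs by auto
          show "set (t # bs @ [i]) \<subseteq> Ip J I p" using xsd asbs iI by (auto simp: Ipp_def)
        qed simp
        then have "pw w (t # bs @ [i]) + w i t \<le> 0" by simp
        moreover have "as \<in> Paths t" using xsd asbs by (auto simp: Paths_def)
        ultimately show ?thesis using h_ge[of as t] xs(2) e1 by simp
      qed
    qed
  qed
  have "\<forall>j i t. p (j,i) > 0 \<longrightarrow> j \<bullet> t - h t \<le> j \<bullet> i - h i"
  proof (intro allI impI)
    fix j i t assume pji: "p (j,i) > 0"
    have "(j,i) \<in> J \<times> I"
    proof (rule ccontr)
      assume "(j,i) \<notin> J \<times> I"
      then have "p (j,i) = 0" using pP unfolding tplans_def by blast
      then show False using pji by simp
    qed
    then have ji: "j \<in> J" "i \<in> I" by auto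
    then have iI: "i \<in> Ipp" using pji by (auto simp: Ipp_def Ip_def)
    have "j \<bullet> (t - i) \<le> w i t" unfolding w_def wgt_def using J ji pji by (intro Max_ge) auto
    then show "j \<bullet> t - h t \<le> j \<bullet> i - h i" using key[OF iI, of t] by (simp add: inner_diff_right)
  qed
  then show ?thesis by blast
qed

lemma block_coupling:
  fixes \<nu> \<rho> :: "'a::euclidean_space measure" and T S :: "'a \<Rightarrow> 'a"
  assumes nu: "\<nu> \<in> prob_measures" and rh: "\<rho> \<in> prob_measures"
    and Tm: "T \<in> borel_measurable borel" and Sm: "S \<in> borel_measurable borel"
    and Tf: "finite (range T)" and Sf: "finite (range S)"
    and pP: "p \<in> tplans (range T) (range S) (\<lambda>j. measure \<nu> (T -` {j})) (\<lambda>i. measure \<rho> (S -` {i}))"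
  shows "\<exists>\<gamma>\<in>couplings \<nu> \<rho>. \<forall>j i. measure \<gamma> (T -` {j} \<times> S -` {i}) = p (j,i)"
proof -
  note N = prob_measuresD[OF nu] and R = prob_measuresD[OF rh]
  interpret pp: pair_prob_space \<nu> \<rho>
    by (simp add: pair_prob_space_def pair_sigma_finite_def N(1) R(1) prob_space_imp_sigma_finite)
  define J where "J = range T"
  define I where "I = range S"
  define nuT where "nuT = (\<lambda>j. measure \<nu> (T -` {j}))"
  define rhoS where "rhoS = (\<lambda>i. measure \<rho> (S -` {i}))"
  have J: "finite J" and I: "finite I" using Tf Sf by (auto simp: J_def I_def)
  have pP': "p \<in> tplans J I nuT rhoS" using pP by (simp add: J_def I_def nuT_def rhoS_def)
  have pz: "\<And>x. x \<notin> J \<times> I \<Longrightarrow> p x = 0" and pnn: "\<And>x. 0 \<le> p x"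
    and prow: "\<And>j. j \<in> J \<Longrightarrow> (\<Sum>i\<in>I. p (j,i)) = nuT j"
    and pcol: "\<And>i. i \<in> I \<Longrightarrow> (\<Sum>j\<in>J. p (j,i)) = rhoS i"
    using pP' by (auto simp: tplans_def)
  have ple1: "p (j,i) \<le> nuT j" if "j \<in> J" "i \<in> I" for j i using tplans_le_nu(1)[OF pP' I that J] .
  have ple2: "p (j,i) \<le> rhoS i" if "j \<in> J" "i \<in> I" for j i using tplans_le_nu(2)[OF pP' I that J] .
  have Tmn: "T \<in> borel_measurable \<nu>" using Tm measurable_cong_sets[OF N(2) refl] by blast
  have Smr: "S \<in> borel_measurable \<rho>" using Sm measurable_cong_sets[OF R(2) refl] by blast
  have Tset: "T -` {j} \<in> sets borel" for j using measurable_sets[OF Tm, of "{j}"] by simp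
  have Sset: "S -` {i} \<in> sets borel" for i using measurable_sets[OF Sm, of "{i}"] by simp
  define c where "c = (\<lambda>j i. p (j,i) / (nuT j * rhoS i))"
  have cnn: "0 \<le> c j i" for j i using pnn[of "(j,i)"] by (simp add: c_def nuT_def rhoS_def)
  have crho: "c j i * rhoS i = p (j,i) / nuT j" if "j \<in> J" "i \<in> I" for j i
  proof (cases "rhoS i = 0")
    case True
    then have "p (j,i) = 0" using ple2[OF that] pnn[of "(j,i)"] by simp
    then show ?thesis by (simp add: c_def)
  next
    case False then show ?thesis by (simp add: c_def)
  qed
  have cnu: "c j i * nuT j = p (j,i) / rhoS i" if "j \<in> J" "i \<in> I" for j i
  proof (cases "nuT j = 0")
    case True
    then have "p (j,i) = 0" using ple1[OF that] pnn[of "(j,i)"] by simp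
    then show ?thesis by (simp add: c_def)
  next
    case False then show ?thesis by (simp add: c_def)
  qed
  have cprod: "c j i * nuT j * rhoS i = p (j,i)" if "j \<in> J" "i \<in> I" for j i
  proof (cases "nuT j = 0")
    case True
    then have "p (j,i) = 0" using ple1[OF that] pnn[of "(j,i)"] by simp
    then show ?thesis by (simp add: c_def)
  next
    case False
    then show ?thesis using cnu[OF that] ple2[OF that] pnn[of "(j,i)"]
      by (cases "rhoS i = 0") (auto simp: field_simps)
  qed
  define k where "k = (\<lambda>z. ennreal (c (T (fst z)) (S (snd z))))"
  have T1: "(\<lambda>z. T (fst z)) \<in> borel_measurable (\<nu> \<Otimes>\<^sub>M \<rho>)"
    by (rule measurable_compose[OF measurable_fst Tmn])
  have S1: "(\<lambda>z. S (snd z)) \<in> borel_measurable (\<nu> \<Otimes>\<^sub>M \<rho>)"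
    by (rule measurable_compose[OF measurable_snd Smr])
  have T1f: "finite (range (\<lambda>z::'a\<times>'a. T (fst z)))" using Tf by (rule finite_subset[rotated]) auto
  have S1f: "finite (range (\<lambda>z::'a\<times>'a. S (snd z)))" using Sf by (rule finite_subset[rotated]) auto
  have km: "k \<in> borel_measurable (\<nu> \<Otimes>\<^sub>M \<rho>)"
    unfolding k_def
  proof (rule finite_range_comp_meas[OF T1 T1f, of "\<lambda>j z. ennreal (c j (S (snd z)))"])
    fix j
    show "(\<lambda>z. ennreal (c j (S (snd z)))) \<in> borel_measurable (\<nu> \<Otimes>\<^sub>M \<rho>)"
      by (rule finite_range_comp_meas[OF S1 S1f, of "\<lambda>i z. ennreal (c j i)"]) simp
  qed
  define \<gamma> where "\<gamma> = density (\<nu> \<Otimes>\<^sub>M \<rho>) k"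
  have sg: "sets \<gamma> = sets (borel \<Otimes>\<^sub>M borel)"
    unfolding \<gamma>_def sets_density by (rule sets_pair_measure_cong[OF N(2) R(2)])
  have spg: "space \<gamma> = UNIV"
    unfolding \<gamma>_def by (simp add: space_pair_measure N(3) R(3))
  have rect: "emeasure \<gamma> (A \<times> B) = ennreal (\<Sum>x\<in>J \<times> I. c (fst x) (snd x) * measure \<nu> (A \<inter> T -` {fst x}) * measure \<rho> (B \<inter> S -` {snd x}))"
    if A: "A \<in> sets borel" and B: "B \<in> sets borel" for A B
  proof -
    have AB: "A \<times> B \<in> sets (\<nu> \<Otimes>\<^sub>M \<rho>)" using A B N(2) R(2) by (intro pair_measureI) auto
    have cells: "(A \<inter> T -` {fst x}) \<times> (B \<inter> S -` {snd x}) \<in> sets (\<nu> \<Otimes>\<^sub>M \<rho>)" for x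
      using A B N(2) R(2) Tset Sset by (intro pair_measureI) auto
    have "emeasure \<gamma> (A \<times> B) = (\<integral>\<^sup>+ z. k z * indicator (A \<times> B) z \<partial>(\<nu> \<Otimes>\<^sub>M \<rho>))"
      unfolding \<gamma>_def by (rule emeasure_density[OF km AB])
    also have "\<dots> = (\<integral>\<^sup>+ z. (\<Sum>x\<in>J \<times> I. ennreal (c (fst x) (snd x)) * indicator ((A \<inter> T -` {fst x}) \<times> (B \<inter> S -` {snd x})) z) \<partial>(\<nu> \<Otimes>\<^sub>M \<rho>))"
    proof (rule nn_integral_cong)
      fix z :: "'a \<times> 'a"
      obtain y w where z: "z = (y, w)" by (cases z)
      have "(\<Sum>x\<in>J \<times> I. ennreal (c (fst x) (snd x)) * indicator ((A \<inter> T -` {fst x}) \<times> (B \<inter> S -` {snd x})) z)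
          = (\<Sum>x\<in>J \<times> I. if x = (T y, S w) then k z * indicator (A \<times> B) z else 0)"
        by (intro sum.cong refl) (auto simp: z k_def indicator_def)
      also have "\<dots> = k z * indicator (A \<times> B) z"
        using J I by (simp add: sum.delta' J_def I_def)
      finally show "k z * indicator (A \<times> B) z = (\<Sum>x\<in>J \<times> I. ennreal (c (fst x) (snd x)) * indicator ((A \<inter> T -` {fst x}) \<times> (B \<inter> S -` {snd x})) z)"
        by simp
    qed
    also have "\<dots> = (\<Sum>x\<in>J \<times> I. ennreal (c (fst x) (snd x)) * emeasure (\<nu> \<Otimes>\<^sub>M \<rho>) ((A \<inter> T -` {fst x}) \<times> (B \<inter> S -` {snd x})))"
      using cells by (subst nn_integral_sum) (auto simp: nn_integral_cmult_indicator)
    also have "\<dots> = (\<Sum>x\<in>J \<times> I. ennreal (c (fst x) (snd x) * measure \<nu> (A \<inter> T -` {fst x}) * measure \<rho> (B \<inter> S -` {snd x})))"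
    proof (intro sum.cong refl)
      fix x :: "'a \<times> 'a"
      have "emeasure (\<nu> \<Otimes>\<^sub>M \<rho>) ((A \<inter> T -` {fst x}) \<times> (B \<inter> S -` {snd x})) = emeasure \<nu> (A \<inter> T -` {fst x}) * emeasure \<rho> (B \<inter> S -` {snd x})"
        using A B N(2) R(2) Tset Sset by (intro pp.M2.emeasure_pair_measure_Times) auto
      then show "ennreal (c (fst x) (snd x)) * emeasure (\<nu> \<Otimes>\<^sub>M \<rho>) ((A \<inter> T -` {fst x}) \<times> (B \<inter> S -` {snd x})) =
          ennreal (c (fst x) (snd x) * measure \<nu> (A \<inter> T -` {fst x}) * measure \<rho> (B \<inter> S -` {snd x}))"
        by (simp add: pp.M1.emeasure_eq_measure pp.M2.emeasure_eq_measure ennreal_mult cnn mult.assoc)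
    qed
    also have "\<dots> = ennreal (\<Sum>x\<in>J \<times> I. c (fst x) (snd x) * measure \<nu> (A \<inter> T -` {fst x}) * measure \<rho> (B \<inter> S -` {snd x}))"
      by (rule sum_ennreal) (simp add: cnn)
    finally show ?thesis .
  qed
  have part: "(\<Sum>j\<in>J. measure \<nu> (A \<inter> T -` {j})) = measure \<nu> A" if A: "A \<in> sets borel" for A
  proof -
    have "measure \<nu> (\<Union>j\<in>J. A \<inter> T -` {j}) = (\<Sum>j\<in>J. measure \<nu> (A \<inter> T -` {j}))"
      using J A Tset N(2) by (intro pp.M1.finite_measure_finite_Union) (auto simp: disjoint_family_on_def)
    moreover have "(\<Union>j\<in>J. A \<inter> T -` {j}) = A" by (auto simp: J_def)
    ultimately show ?thesis by simp
  qed
  have part2: "(\<Sum>i\<in>I. measure \<rho> (B \<inter> S -` {i})) = measure \<rho> B" if B: "B \<in> sets borel" for B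
  proof -
    have "measure \<rho> (\<Union>i\<in>I. B \<inter> S -` {i}) = (\<Sum>i\<in>I. measure \<rho> (B \<inter> S -` {i}))"
      using I B Sset R(2) by (intro pp.M2.finite_measure_finite_Union) (auto simp: disjoint_family_on_def)
    moreover have "(\<Union>i\<in>I. B \<inter> S -` {i}) = B" by (auto simp: I_def)
    ultimately show ?thesis by simp
  qed
  have marg1: "emeasure \<gamma> (A \<times> UNIV) = emeasure \<nu> A" if A: "A \<in> sets borel" for A
  proof -
    have "(\<Sum>x\<in>J \<times> I. c (fst x) (snd x) * measure \<nu> (A \<inter> T -` {fst x}) * measure \<rho> (UNIV \<inter> S -` {snd x}))
        = (\<Sum>j\<in>J. \<Sum>i\<in>I. c j i * measure \<nu> (A \<inter> T -` {j}) * rhoS i)"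
      by (simp add: sum.cartesian_product rhoS_def case_prod_beta)
    also have "\<dots> = (\<Sum>j\<in>J. measure \<nu> (A \<inter> T -` {j}))"
    proof (intro sum.cong refl)
      fix j assume j: "j \<in> J"
      have "(\<Sum>i\<in>I. c j i * measure \<nu> (A \<inter> T -` {j}) * rhoS i) = measure \<nu> (A \<inter> T -` {j}) * (\<Sum>i\<in>I. c j i * rhoS i)"
        by (subst sum_distrib_left) (simp add: mult_ac)
      also have "(\<Sum>i\<in>I. c j i * rhoS i) = (\<Sum>i\<in>I. p (j,i) / nuT j)"
        using crho j by (intro sum.cong) auto
      also have "\<dots> = nuT j / nuT j" using prow[OF j] by (simp add: sum_divide_distrib[symmetric])
      also have "measure \<nu> (A \<inter> T -` {j}) * (nuT j / nuT j) = measure \<nu> (A \<inter> T -` {j})"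
      proof (cases "nuT j = 0")
        case True
        have "measure \<nu> (A \<inter> T -` {j}) \<le> nuT j"
          unfolding nuT_def using Tset N(2) by (intro pp.M1.finite_measure_mono) auto
        then show ?thesis using True measure_nonneg[of \<nu> "A \<inter> T -` {j}"] by simp
      qed simp
      finally show "(\<Sum>i\<in>I. c j i * measure \<nu> (A \<inter> T -` {j}) * rhoS i) = measure \<nu> (A \<inter> T -` {j})" .
    qed
    also have "\<dots> = measure \<nu> A" by (rule part[OF A])
    finally show ?thesis using rect[OF A sets.top[of borel]] by (simp add: pp.M1.emeasure_eq_measure)
  qed
  have marg2: "emeasure \<gamma> (UNIV \<times> B) = emeasure \<rho> B" if B: "B \<in> sets borel" for B
  proof -
    have "(\<Sum>x\<in>J \<times> I. c (fst x) (snd x) * measure \<nu> (UNIV \<inter> T -` {fst x}) * measure \<rho> (B \<inter> S -` {snd x}))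
        = (\<Sum>i\<in>I. \<Sum>j\<in>J. c j i * nuT j * measure \<rho> (B \<inter> S -` {i}))"
      by (subst sum.swap) (simp add: sum.cartesian_product nuT_def case_prod_beta)
    also have "\<dots> = (\<Sum>i\<in>I. measure \<rho> (B \<inter> S -` {i}))"
    proof (intro sum.cong refl)
      fix i assume i: "i \<in> I"
      have "(\<Sum>j\<in>J. c j i * nuT j * measure \<rho> (B \<inter> S -` {i})) = measure \<rho> (B \<inter> S -` {i}) * (\<Sum>j\<in>J. c j i * nuT j)"
        by (subst sum_distrib_left) (simp add: mult_ac)
      also have "(\<Sum>j\<in>J. c j i * nuT j) = (\<Sum>j\<in>J. p (j,i) / rhoS i)"
        using cnu i by (intro sum.cong) auto
      also have "\<dots> = rhoS i / rhoS i" using pcol[OF i] by (simp add: sum_divide_distrib[symmetric])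
      also have "measure \<rho> (B \<inter> S -` {i}) * (rhoS i / rhoS i) = measure \<rho> (B \<inter> S -` {i})"
      proof (cases "rhoS i = 0")
        case True
        have "measure \<rho> (B \<inter> S -` {i}) \<le> rhoS i"
          unfolding rhoS_def using Sset R(2) by (intro pp.M2.finite_measure_mono) auto
        then show ?thesis using True measure_nonneg[of \<rho> "B \<inter> S -` {i}"] by simp
      qed simp
      finally show "(\<Sum>j\<in>J. c j i * nuT j * measure \<rho> (B \<inter> S -` {i})) = measure \<rho> (B \<inter> S -` {i})" .
    qed
    also have "\<dots> = measure \<rho> B" by (rule part2[OF B])
    finally show ?thesis using rect[OF sets.top[of borel] B] by (simp add: pp.M2.emeasure_eq_measure)
  qed
  have fstm: "fst \<in> measurable \<gamma> borel" using measurable_cong_sets[OF sg refl] measurable_fst by blast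
  have sndm: "snd \<in> measurable \<gamma> borel" using measurable_cong_sets[OF sg refl] measurable_snd by blast
  have d1: "distr \<gamma> borel fst = \<nu>"
  proof (rule measure_eqI)
    show "sets (distr \<gamma> borel fst) = sets \<nu>" using N(2) by simp
    fix A assume "A \<in> sets (distr \<gamma> borel fst)"
    then have A: "A \<in> sets borel" by simp
    have "fst -` A \<inter> space \<gamma> = A \<times> UNIV" by (auto simp: spg)
    then show "emeasure (distr \<gamma> borel fst) A = emeasure \<nu> A"
      using marg1[OF A] by (simp add: emeasure_distr[OF fstm A])
  qed
  have d2: "distr \<gamma> borel snd = \<rho>"
  proof (rule measure_eqI)
    show "sets (distr \<gamma> borel snd) = sets \<rho>" using R(2) by simp
    fix B assume "B \<in> sets (distr \<gamma> borel snd)"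
    then have B: "B \<in> sets borel" by simp
    have "snd -` B \<inter> space \<gamma> = UNIV \<times> B" by (auto simp: spg)
    then show "emeasure (distr \<gamma> borel snd) B = emeasure \<rho> B"
      using marg2[OF B] by (simp add: emeasure_distr[OF sndm B])
  qed
  have pg: "prob_space \<gamma>"
  proof (rule prob_spaceI)
    have "emeasure \<gamma> (space \<gamma>) = emeasure \<gamma> (UNIV \<times> UNIV)" by (simp add: spg)
    also have "\<dots> = emeasure \<nu> UNIV" using marg1[of UNIV] by simp
    also have "\<dots> = 1" using pp.M1.emeasure_space_1 N(3) by simp
    finally show "emeasure \<gamma> (space \<gamma>) = 1" .
  qed
  have cp: "\<gamma> \<in> couplings \<nu> \<rho>" unfolding couplings_def using pg sg d1 d2 by simp
  have cell: "measure \<gamma> (T -` {j0} \<times> S -` {i0}) = p (j0,i0)" for j0 i0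
  proof (cases "j0 \<in> J \<and> i0 \<in> I")
    case True
    have "(\<Sum>x\<in>J \<times> I. c (fst x) (snd x) * measure \<nu> (T -` {j0} \<inter> T -` {fst x}) * measure \<rho> (S -` {i0} \<inter> S -` {snd x}))
        = (\<Sum>x\<in>J \<times> I. if x = (j0, i0) then c j0 i0 * nuT j0 * rhoS i0 else 0)"
    proof (intro sum.cong refl)
      fix x :: "'a \<times> 'a"
      obtain a b where x: "x = (a,b)" by (cases x)
      have e1: "T -` {j0} \<inter> T -` {a} = (if a = j0 then T -` {j0} else {})" by auto
      have e2: "S -` {i0} \<inter> S -` {b} = (if b = i0 then S -` {i0} else {})" by auto
      show "c (fst x) (snd x) * measure \<nu> (T -` {j0} \<inter> T -` {fst x}) * measure \<rho> (S -` {i0} \<inter> S -` {snd x})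
          = (if x = (j0, i0) then c j0 i0 * nuT j0 * rhoS i0 else 0)"
        unfolding x fst_conv snd_conv e1 e2 by (simp add: nuT_def rhoS_def)
    qed
    also have "\<dots> = c j0 i0 * nuT j0 * rhoS i0" using True J I by (simp add: sum.delta')
    also have "\<dots> = p (j0, i0)" using cprod True by simp
    finally have "emeasure \<gamma> (T -` {j0} \<times> S -` {i0}) = ennreal (p (j0,i0))"
      using rect[OF Tset Sset] by simp
    then show ?thesis using pnn by (simp add: measure_def)
  next
    case False
    then have "T -` {j0} \<times> S -` {i0} = {}" by (auto simp: J_def I_def vimage_def)
    moreover have "p (j0,i0) = 0" using False pz by auto
    ultimately show ?thesis by (metis measure_empty)
  qed
  show ?thesis using cp cell by blast
qed

lemma sum_cells:
  fixes T :: "'a::euclidean_space \<Rightarrow> 'a" and M :: "'a measure"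
  assumes M: "M \<in> prob_measures" and T: "T \<in> borel_measurable borel" and fin: "finite (range T)"
  shows "(\<Sum>j\<in>range T. measure M (T -` {j})) = 1"
proof -
  note A = prob_measuresD[OF M]
  interpret prob_space M by (rule A(1))
  have Tm: "T \<in> borel_measurable M" using T measurable_cong_sets[OF A(2) refl] by blast
  have "(\<integral>x. (\<lambda>_. 1::real) (T x) \<partial>M) = (\<Sum>j\<in>range T. 1 * measure M (T -` {j} \<inter> space M))"
    by (rule integral_finite_range(2)[OF Tm fin finite_measure_axioms])
  moreover have "prob UNIV = 1" using prob_space A(3) by simp
  ultimately show ?thesis using A(3) by simp
qed

lemma dirB:
  fixes \<mu> \<nu> \<rho> :: "'a::euclidean_space measure"
  assumes mu: "\<mu> \<in> prob_measures" and nu: "\<nu> \<in> prob_measures"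
    and im: "integrable \<mu> norm" and inu: "integrable \<nu> norm"
    and rP1: "\<rho> \<in> P1" and e: "e > 0"
  shows "\<exists>f\<in>C1. (\<integral>x. f x \<partial>\<nu>) - (\<integral>x. f x \<partial>\<mu>) \<le> Ccost \<nu> \<rho> - Ccost \<mu> \<rho> + e"
proof -
  have rh: "\<rho> \<in> prob_measures" by (rule P1_prob[OF rP1])
  note M = prob_measuresD[OF mu] and N = prob_measuresD[OF nu] and R = prob_measuresD[OF rh]
  interpret mp: prob_space \<mu> by (rule M(1))
  interpret np: prob_space \<nu> by (rule N(1))
  interpret rp: prob_space \<rho> by (rule R(1))
  define M\<mu> where "M\<mu> = (\<integral>x. norm x \<partial>\<mu>)"
  define M\<nu> where "M\<nu> = (\<integral>x. norm x \<partial>\<nu>)"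
  have M\<mu>0: "M\<mu> \<ge> 0" and M\<nu>0: "M\<nu> \<ge> 0" by (simp_all add: M\<mu>_def M\<nu>_def)
  obtain d R0 where d: "d > 0" and iq: "integrable \<nu> (\<lambda>y. norm (y - qz d R0 y))"
    and eq: "(\<integral>y. norm (y - qz d R0 y) \<partial>\<nu>) \<le> e/4"
    using quant_err[OF nu inu, of "e/4"] e by auto
  define T where "T = (qz d R0 :: 'a \<Rightarrow> 'a)"
  define E\<nu> where "E\<nu> = (\<integral>y. norm (y - T y) \<partial>\<nu>)"
  have E\<nu>: "E\<nu> \<le> e/4" using eq by (simp add: E\<nu>_def T_def)
  have iqT: "integrable \<nu> (\<lambda>y. norm (y - T y))" using iq by (simp add: T_def)
  define d' where "d' = e / (4 * DIM('a) * (M\<mu> + M\<nu> + 1))"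
  have d': "d' > 0" using e M\<mu>0 M\<nu>0 by (simp add: d'_def)
  have Dd': "DIM('a) * d' * (M\<mu> + M\<nu>) \<le> e/4"
  proof -
    define Z where "Z = M\<mu> + M\<nu>"
    have Z: "Z \<ge> 0" using M\<mu>0 M\<nu>0 by (simp add: Z_def)
    have a: "real DIM('a) * d' = e / (4 * (Z + 1))" by (simp add: d'_def Z_def)
    have "e / (4 * (Z + 1)) * Z \<le> e / 4" using e Z by (simp add: field_simps)
    then show ?thesis using a by (simp add: Z_def)
  qed
  define S where "S = (qz d' 1 :: 'a \<Rightarrow> 'a)"
  have Sn: "norm (S z) \<le> 1" for z
    using qz_norm[OF d', of 1 z] by (cases "norm z \<le> 1") (auto simp: S_def qz_far)
  have Serr: "norm (z - S z) \<le> DIM('a) * d'" if "norm z \<le> 1" for z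
    using qz_err[OF d' that] by (simp add: S_def)
  have Tn: "norm (T y) \<le> norm y" for y using qz_norm[OF d] by (simp add: T_def)
  have Tm: "T \<in> borel_measurable borel" by (simp add: T_def qz_meas)
  have Sm: "S \<in> borel_measurable borel" by (simp add: S_def qz_meas)
  have Tf: "finite (range T)" by (simp add: T_def qz_finite[OF d])
  have Sf: "finite (range S)" by (simp add: S_def qz_finite[OF d'])
  have Tmn: "T \<in> borel_measurable \<nu>" using Tm measurable_cong_sets[OF N(2) refl] by blast
  have Smr: "S \<in> borel_measurable \<rho>" using Sm measurable_cong_sets[OF R(2) refl] by blast
  define J where "J = range T"
  define I where "I = range S"
  define nuT where "nuT = (\<lambda>j. measure \<nu> (T -` {j}))"
  define rhoS where "rhoS = (\<lambda>i. measure \<rho> (S -` {i}))"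
  have J: "finite J" "J \<noteq> {}" and I: "finite I" "I \<noteq> {}" using Tf Sf by (auto simp: J_def I_def)
  have sumnu: "(\<Sum>j\<in>J. nuT j) = 1" unfolding J_def nuT_def by (rule sum_cells[OF nu Tm Tf])
  have sumrho: "(\<Sum>i\<in>I. rhoS i) = 1" unfolding I_def rhoS_def by (rule sum_cells[OF rh Sm Sf])
  define p0 where "p0 = (\<lambda>x. if x \<in> J \<times> I then nuT (fst x) * rhoS (snd x) else 0)"
  have p0P: "p0 \<in> tplans J I nuT rhoS"
  proof -
    have "(\<Sum>i\<in>I. p0 (j,i)) = nuT j" if "j \<in> J" for j
      using that sumrho by (simp add: p0_def sum_distrib_left[symmetric])
    moreover have "(\<Sum>j\<in>J. p0 (j,i)) = rhoS i" if "i \<in> I" for i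
      using that sumnu by (simp add: p0_def sum_distrib_right[symmetric])
    ultimately show ?thesis by (auto simp: tplans_def p0_def nuT_def rhoS_def)
  qed
  obtain p where pP: "p \<in> tplans J I nuT rhoS" and opt: "\<forall>q\<in>tplans J I nuT rhoS. tobj J I q \<le> tobj J I p"
    using lp_max[OF J(1) I(1)] p0P by blast
  obtain h where h: "\<And>j i t. p (j,i) > 0 \<Longrightarrow> j \<bullet> t - h t \<le> j \<bullet> i - h i"
    using potentials[OF J(1) I(1) pP opt] by blast
  have pz: "\<And>x. x \<notin> J \<times> I \<Longrightarrow> p x = 0" and pnn: "\<And>x. 0 \<le> p x"
    and prow: "\<And>j. j \<in> J \<Longrightarrow> (\<Sum>i\<in>I. p (j,i)) = nuT j"
    and pcol: "\<And>i. i \<in> I \<Longrightarrow> (\<Sum>j\<in>J. p (j,i)) = rhoS i"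
    using pP by (auto simp: tplans_def)
  have sI: "norm t \<le> 1" if "t \<in> I" for t using that Sn by (auto simp: I_def)
  define f where "f = (\<lambda>y. Max ((\<lambda>t. t \<bullet> y + (- h t)) ` I))"
  have fC1: "f \<in> C1" unfolding f_def by (rule maxaff(1)[OF I, where s="\<lambda>t. t"]) (use sI in auto)
  have F3: "t \<bullet> y - h t \<le> f y" if "t \<in> I" for t y
    using maxaff(2)[OF I, where s="\<lambda>t. t" and c="\<lambda>t. - h t", OF sI that] by (simp add: f_def)
  have F2: "f j = j \<bullet> i - h i" if pji: "p (j,i) > 0" for j i
  proof -
    have ji: "(j,i) \<in> J \<times> I"
    proof (rule ccontr)
      assume "(j,i) \<notin> J \<times> I"
      then have "p (j,i) = 0" by (rule pz)
      then show False using pji by simp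
    qed
    obtain t where t: "t \<in> I" "f j = t \<bullet> j + (- h t)"
      using maxaff(3)[OF I, where s="\<lambda>t. t" and c="\<lambda>t. - h t" and y=j] sI unfolding f_def by blast
    have "f j \<le> j \<bullet> i - h i" using t h[OF pji, of t] by (simp add: inner_commute)
    moreover have "j \<bullet> i - h i \<le> f j" using F3[of i j] ji by (simp add: inner_commute)
    ultimately show ?thesis by simp
  qed
  have disc: "tobj J I p = (\<Sum>j\<in>J. f j * nuT j) + (\<Sum>i\<in>I. h i * rhoS i)"
  proof -
    have "tobj J I p = (\<Sum>x\<in>J \<times> I. p x * (f (fst x) + h (snd x)))"
      unfolding tobj_def
    proof (intro sum.cong refl)
      fix x :: "'a \<times> 'a"
      show "p x * (fst x \<bullet> snd x) = p x * (f (fst x) + h (snd x))"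
      proof (cases "p x > 0")
        case True then show ?thesis using F2[of "fst x" "snd x"] by simp
      next
        case False then have "p x = 0" using pnn[of x] by simp
        then show ?thesis by simp
      qed
    qed
    also have "\<dots> = (\<Sum>j\<in>J. \<Sum>i\<in>I. p (j,i) * f j) + (\<Sum>j\<in>J. \<Sum>i\<in>I. p (j,i) * h i)"
      by (simp add: sum.cartesian_product case_prod_beta algebra_simps sum.distrib)
    also have "(\<Sum>j\<in>J. \<Sum>i\<in>I. p (j,i) * f j) = (\<Sum>j\<in>J. f j * nuT j)"
    proof (intro sum.cong refl)
      fix j assume j: "j \<in> J"
      have "(\<Sum>i\<in>I. p (j,i) * f j) = (\<Sum>i\<in>I. p (j,i)) * f j" by (simp add: sum_distrib_right)
      then show "(\<Sum>i\<in>I. p (j,i) * f j) = f j * nuT j" using prow[OF j] by simp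
    qed
    also have "(\<Sum>j\<in>J. \<Sum>i\<in>I. p (j,i) * h i) = (\<Sum>i\<in>I. h i * rhoS i)"
    proof (subst sum.swap, intro sum.cong refl)
      fix i assume i: "i \<in> I"
      have "(\<Sum>j\<in>J. p (j,i) * h i) = (\<Sum>j\<in>J. p (j,i)) * h i" by (simp add: sum_distrib_right)
      then show "(\<Sum>j\<in>J. p (j,i) * h i) = h i * rhoS i" using pcol[OF i] by simp
    qed
    finally show ?thesis .
  qed
  have fT: "(\<integral>y. f (T y) \<partial>\<nu>) = (\<Sum>j\<in>J. f j * nuT j)"
    using integral_finite_range(2)[OF Tmn Tf np.finite_measure_axioms, of f] N(3)
    by (simp add: J_def nuT_def)
  have ifT: "integrable \<nu> (\<lambda>y. f (T y))" by (rule integral_finite_range(1)[OF Tmn Tf np.finite_measure_axioms])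
  have hS: "(\<integral>z. h (S z) \<partial>\<rho>) = (\<Sum>i\<in>I. h i * rhoS i)"
    using integral_finite_range(2)[OF Smr Sf rp.finite_measure_axioms, of h] R(3)
    by (simp add: I_def rhoS_def)
  have ihS: "integrable \<rho> (\<lambda>z. h (S z))" by (rule integral_finite_range(1)[OF Smr Sf rp.finite_measure_axioms])
  have hSm: "(\<lambda>z. h (S z)) \<in> borel_measurable borel"
    by (rule finite_range_comp_meas[OF Sm Sf, of "\<lambda>i z. h i"]) simp
  have fint_nu: "integrable \<nu> f" by (rule C1_integrable[OF fC1 nu inu])
  have fint_mu: "integrable \<mu> f" by (rule C1_integrable[OF fC1 mu im])
  have fm: "f \<in> borel_measurable borel" by (rule C1_meas[OF fC1])
  have S1: "(\<integral>y. f y \<partial>\<nu>) \<le> (\<Sum>j\<in>J. f j * nuT j) + E\<nu>"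
  proof -
    have "(\<integral>y. f y \<partial>\<nu>) \<le> (\<integral>y. f (T y) + norm (y - T y) \<partial>\<nu>)"
      by (rule Bochner_Integration.integral_mono[OF fint_nu Bochner_Integration.integrable_add[OF ifT iqT]])
         (use C1_lip[OF fC1] in \<open>smt (verit)\<close>)
    also have "\<dots> = (\<integral>y. f (T y) \<partial>\<nu>) + E\<nu>"
      unfolding E\<nu>_def by (rule Bochner_Integration.integral_add[OF ifT iqT])
    finally show ?thesis using fT by simp
  qed
  have S2: "Ccost \<mu> \<rho> \<le> (\<integral>x. f x \<partial>\<mu>) + (\<Sum>i\<in>I. h i * rhoS i) + DIM('a) * d' * M\<mu>"
  proof (rule Ccost_le[OF mu rP1 im])
    fix \<pi> assume cp: "\<pi> \<in> couplings \<mu> \<rho>"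
    have i1: "integrable \<pi> (\<lambda>z. fst z \<bullet> snd z)" by (rule cp_inner_bound(1)[OF cp rP1 im])
    have i2: "integrable \<pi> (\<lambda>z. f (fst z))" using cp_int_fst(2)[OF cp fm] fint_mu by simp
    have i3: "integrable \<pi> (\<lambda>z. h (S (snd z)))" using cp_int_snd(2)[OF cp hSm] ihS by simp
    have i4: "integrable \<pi> (\<lambda>z. DIM('a) * d' * norm (fst z))"
      using cp_int_fst(2)[OF cp, of norm] im by simp
    have ae: "AE z in \<pi>. norm (snd z) \<le> 1" by (rule cp_AE_snd[OF cp P1_AE[OF rP1]]) simp
    have pt: "fst z \<bullet> snd z \<le> f (fst z) + h (S (snd z)) + DIM('a) * d' * norm (fst z)"
      if "norm (snd z) \<le> 1" for z
    proof -
      have "fst z \<bullet> (snd z - S (snd z)) \<le> norm (fst z) * norm (snd z - S (snd z))"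
        by (rule order_trans[OF _ norm_cauchy_schwarz]) simp
      also have "\<dots> \<le> norm (fst z) * (DIM('a) * d')" by (intro mult_left_mono Serr that) simp
      finally have a: "fst z \<bullet> (snd z - S (snd z)) \<le> DIM('a) * d' * norm (fst z)" by (simp add: mult_ac)
      have "S (snd z) \<in> I" by (simp add: I_def)
      then have b: "S (snd z) \<bullet> fst z - h (S (snd z)) \<le> f (fst z)" by (rule F3)
      show ?thesis using a b by (simp add: inner_diff_right inner_commute)
    qed
    have "(\<integral>z. fst z \<bullet> snd z \<partial>\<pi>) \<le> (\<integral>z. f (fst z) + h (S (snd z)) + DIM('a) * d' * norm (fst z) \<partial>\<pi>)"
      by (rule integral_mono_AE[OF i1]) (use i2 i3 i4 ae pt in auto)
    also have "\<dots> = (\<integral>z. f (fst z) \<partial>\<pi>) + (\<integral>z. h (S (snd z)) \<partial>\<pi>) + (\<integral>z. DIM('a) * d' * norm (fst z) \<partial>\<pi>)"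
      using i2 i3 i4 by simp
    also have "\<dots> = (\<integral>x. f x \<partial>\<mu>) + (\<Sum>i\<in>I. h i * rhoS i) + DIM('a) * d' * M\<mu>"
      using cp_int_fst(1)[OF cp fm] cp_int_snd(1)[OF cp hSm] cp_int_fst(1)[OF cp, of norm] hS
      by (simp add: M\<mu>_def)
    finally show "(\<integral>z. fst z \<bullet> snd z \<partial>\<pi>) \<le> (\<integral>x. f x \<partial>\<mu>) + (\<Sum>i\<in>I. h i * rhoS i) + DIM('a) * d' * M\<mu>" .
  qed
  have pP2: "p \<in> tplans (range T) (range S) (\<lambda>j. measure \<nu> (T -` {j})) (\<lambda>i. measure \<rho> (S -` {i}))"
    using pP by (simp add: J_def I_def nuT_def rhoS_def)
  obtain \<gamma> where cp: "\<gamma> \<in> couplings \<nu> \<rho>" and cell: "\<And>j i. measure \<gamma> (T -` {j} \<times> S -` {i}) = p (j,i)"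
    using block_coupling[OF nu rh Tm Sm Tf Sf pP2] by blast
  have pg: "prob_space \<gamma>" by (rule cp_prob[OF cp])
  interpret gp: prob_space \<gamma> by (rule pg)
  have sg: "sets \<gamma> = sets (borel \<Otimes>\<^sub>M borel)" by (rule cp_sets[OF cp])
  have spg: "space \<gamma> = UNIV" using sets_eq_imp_space_eq[OF sg] by (simp add: space_pair_measure)
  define U where "U = (\<lambda>z::'a \<times> 'a. (T (fst z), S (snd z)))"
  have Um: "U \<in> borel_measurable \<gamma>"
  proof -
    have "(\<lambda>z. (T (fst z), S (snd z))) \<in> measurable \<gamma> (borel \<Otimes>\<^sub>M borel)"
      by (rule measurable_Pair[OF measurable_compose[OF cp_fst_meas[OF cp] Tm] measurable_compose[OF cp_snd_meas[OF cp] Sm]])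
    then show ?thesis unfolding U_def borel_prod .
  qed
  have rU: "range U = J \<times> I"
  proof
    show "range U \<subseteq> J \<times> I" by (auto simp: U_def J_def I_def)
    show "J \<times> I \<subseteq> range U"
    proof
      fix x assume "x \<in> J \<times> I"
      then obtain y w where "x = (T y, S w)" by (auto simp: J_def I_def)
      then have "x = U (y,w)" by (simp add: U_def)
      then show "x \<in> range U" by blast
    qed
  qed
  have Uf: "finite (range U)" using rU J I by simp
  have iTS: "integrable \<gamma> (\<lambda>z. T (fst z) \<bullet> S (snd z))"
    using integral_finite_range(1)[OF Um Uf gp.finite_measure_axioms, of "\<lambda>u. fst u \<bullet> snd u"] by (simp add: U_def)
  have S3a: "(\<integral>z. T (fst z) \<bullet> S (snd z) \<partial>\<gamma>) = tobj J I p"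
  proof -
    have "(\<integral>z. (\<lambda>u. fst u \<bullet> snd u) (U z) \<partial>\<gamma>) = (\<Sum>u\<in>range U. (fst u \<bullet> snd u) * measure \<gamma> (U -` {u} \<inter> space \<gamma>))"
      by (rule integral_finite_range(2)[OF Um Uf gp.finite_measure_axioms])
    also have "\<dots> = (\<Sum>u\<in>J \<times> I. p u * (fst u \<bullet> snd u))"
    proof (unfold rU, intro sum.cong refl)
      fix u :: "'a \<times> 'a"
      have "U -` {u} \<inter> space \<gamma> = T -` {fst u} \<times> S -` {snd u}" by (cases u) (auto simp: U_def spg)
      then show "(fst u \<bullet> snd u) * measure \<gamma> (U -` {u} \<inter> space \<gamma>) = p u * (fst u \<bullet> snd u)"
        using cell[of "fst u" "snd u"] by simp
    qed
    finally show ?thesis by (simp add: U_def tobj_def)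
  qed
  define Eg where "Eg = (\<lambda>y. norm (y - T y) + DIM('a) * d' * norm y)"
  have Egm: "Eg \<in> borel_measurable borel" unfolding Eg_def using Tm by measurable
  have iEg: "integrable \<nu> Eg" unfolding Eg_def using iqT inu by simp
  have iEgp: "integrable \<gamma> (\<lambda>z. Eg (fst z))" using cp_int_fst(2)[OF cp Egm] iEg by simp
  have iInner: "integrable \<gamma> (\<lambda>z. fst z \<bullet> snd z)" by (rule cp_inner_bound(1)[OF cp rP1 inu])
  have aeg: "AE z in \<gamma>. norm (snd z) \<le> 1" by (rule cp_AE_snd[OF cp P1_AE[OF rP1]]) simp
  have ptg: "T (fst z) \<bullet> S (snd z) - Eg (fst z) \<le> fst z \<bullet> snd z" if "norm (snd z) \<le> 1" for z
  proof -
    obtain y w where z: "z = (y, w)" by (cases z)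
    have w1: "norm w \<le> 1" using that z by simp
    have "y \<bullet> w - T y \<bullet> S w = (y - T y) \<bullet> w + T y \<bullet> (w - S w)" by (simp add: inner_diff_left inner_diff_right)
    moreover have "- norm (y - T y) \<le> (y - T y) \<bullet> w"
    proof -
      have "\<bar>(y - T y) \<bullet> w\<bar> \<le> norm (y - T y) * norm w" by (rule Cauchy_Schwarz_ineq2)
      also have "\<dots> \<le> norm (y - T y)" using w1 by (simp add: mult_left_le)
      finally show ?thesis by linarith
    qed
    moreover have "- (DIM('a) * d' * norm y) \<le> T y \<bullet> (w - S w)"
    proof -
      have "\<bar>T y \<bullet> (w - S w)\<bar> \<le> norm (T y) * norm (w - S w)" by (rule Cauchy_Schwarz_ineq2)
      also have "\<dots> \<le> norm y * (DIM('a) * d')" using Tn[of y] Serr[OF w1] by (intro mult_mono) auto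
      finally show ?thesis by (simp add: mult_ac)
    qed
    ultimately show ?thesis by (simp add: z Eg_def)
  qed
  have S3: "tobj J I p - (E\<nu> + DIM('a) * d' * M\<nu>) \<le> Ccost \<nu> \<rho>"
  proof -
    have "(\<integral>z. T (fst z) \<bullet> S (snd z) - Eg (fst z) \<partial>\<gamma>) \<le> (\<integral>z. fst z \<bullet> snd z \<partial>\<gamma>)"
      by (rule integral_mono_AE[OF Bochner_Integration.integrable_diff[OF iTS iEgp] iInner]) (use aeg ptg in auto)
    moreover have "(\<integral>z. T (fst z) \<bullet> S (snd z) - Eg (fst z) \<partial>\<gamma>) = tobj J I p - (\<integral>y. Eg y \<partial>\<nu>)"
      using Bochner_Integration.integral_diff[OF iTS iEgp] S3a cp_int_fst(1)[OF cp Egm] by simp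
    moreover have "(\<integral>y. Eg y \<partial>\<nu>) = E\<nu> + DIM('a) * d' * M\<nu>"
      unfolding Eg_def E\<nu>_def M\<nu>_def using iqT inu by simp
    moreover have "(\<integral>z. fst z \<bullet> snd z \<partial>\<gamma>) \<le> Ccost \<nu> \<rho>" by (rule Ccost_ge[OF nu rP1 inu cp])
    ultimately show ?thesis by linarith
  qed
  have "(\<integral>x. f x \<partial>\<nu>) - (\<integral>x. f x \<partial>\<mu>) \<le> Ccost \<nu> \<rho> - Ccost \<mu> \<rho> + (2 * E\<nu> + DIM('a) * d' * (M\<mu> + M\<nu>))"
    using S1 S2 S3 disc by (simp add: algebra_simps)
  also have "2 * E\<nu> + DIM('a) * d' * (M\<mu> + M\<nu>) \<le> e" using E\<nu> Dd' e by linarith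
  finally show ?thesis using fC1 by (intro bexI[of _ f]) auto
qed

lemma C1_lower:
  fixes \<mu> \<nu> :: "'a::euclidean_space measure"
  assumes mu: "\<mu> \<in> prob_measures" and nu: "\<nu> \<in> prob_measures"
    and im: "integrable \<mu> norm" and inu: "integrable \<nu> norm" and f: "f \<in> C1"
  shows "- (\<integral>x. norm x \<partial>\<nu>) - (\<integral>x. norm x \<partial>\<mu>) \<le> (\<integral>x. f x \<partial>\<nu>) - (\<integral>x. f x \<partial>\<mu>)"
proof -
  interpret mp: prob_space \<mu> using mu by (simp add: prob_measures_def)
  interpret np: prob_space \<nu> using nu by (simp add: prob_measures_def)
  have l1: "f 0 - norm x \<le> f x" for x using C1_lip[OF f, of 0 x] by simp
  have l2: "f x \<le> f 0 + norm x" for x using C1_lip[OF f, of x 0] by simp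
  have "(\<integral>x. f 0 - norm x \<partial>\<nu>) \<le> (\<integral>x. f x \<partial>\<nu>)"
    by (rule Bochner_Integration.integral_mono[OF _ C1_integrable[OF f nu inu] l1]) (use inu in simp)
  moreover have "(\<integral>x. f x \<partial>\<mu>) \<le> (\<integral>x. f 0 + norm x \<partial>\<mu>)"
    by (rule Bochner_Integration.integral_mono[OF C1_integrable[OF f mu im] _ l2]) (use im in simp)
  moreover have "(\<integral>x. f 0 - norm x \<partial>\<nu>) = f 0 - (\<integral>x. norm x \<partial>\<nu>)" using inu by (simp add: np.prob_space)
  moreover have "(\<integral>x. f 0 + norm x \<partial>\<mu>) = f 0 + (\<integral>x. norm x \<partial>\<mu>)" using im by (simp add: mp.prob_space)
  ultimately show ?thesis by linarith
qed

theorem theorem1: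
  fixes \<mu> \<nu> :: "('a::euclidean_space) measure"
  assumes "\<mu> \<in> prob_measures" and "\<nu> \<in> prob_measures"
    and "integrable \<mu> (\<lambda>x. norm x)" and "integrable \<nu> (\<lambda>y. norm y)"
  shows "(INF f\<in>C1. (\<integral>x. f x \<partial>\<nu>) - (\<integral>x. f x \<partial>\<mu>))
       = (INF \<rho>\<in>P1. Ccost \<nu> \<rho> - Ccost \<mu> \<rho>)"
proof -
  note mu = assms(1) and nu = assms(2)
  have im: "integrable \<mu> norm" using assms(3) by simp
  have inu: "integrable \<nu> norm" using assms(4) by simp
  define L where "L = (\<lambda>f::'a \<Rightarrow> real. (\<integral>x. f x \<partial>\<nu>) - (\<integral>x. f x \<partial>\<mu>))"
  define Rr where "Rr = (\<lambda>\<rho>. Ccost \<nu> \<rho> - Ccost \<mu> \<rho>)"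
  define B where "B = - (\<integral>x. norm x \<partial>\<nu>) - (\<integral>x. norm x \<partial>\<mu>)"
  have Lb: "B \<le> L f" if "f \<in> C1" for f unfolding L_def B_def by (rule C1_lower[OF mu nu im inu that])
  obtain f0 :: "'a \<Rightarrow> real" where f0: "f0 \<in> C1"
    using maxaff(1)[of "{0::nat}" "\<lambda>_. 0::'a" "\<lambda>_. 0"] by auto
  have C1ne: "(C1 :: ('a \<Rightarrow> real) set) \<noteq> {}" using f0 by auto
  obtain \<rho>0 :: "'a measure" where \<rho>0: "\<rho>0 \<in> P1" using dirA[OF mu nu im inu f0, of 1] by auto
  have P1ne: "(P1 :: 'a measure set) \<noteq> {}" using \<rho>0 by auto
  have dB: "\<exists>f\<in>C1. L f \<le> Rr \<rho> + e" if "\<rho> \<in> P1" "e > 0" for \<rho> e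
    unfolding L_def Rr_def by (rule dirB[OF mu nu im inu that])
  have dA: "\<exists>\<rho>\<in>P1. Rr \<rho> \<le> L f + e" if "f \<in> C1" "e > 0" for f e
    unfolding L_def Rr_def by (rule dirA[OF mu nu im inu that])
  have Rb: "B - 1 \<le> Rr \<rho>" if r: "\<rho> \<in> P1" for \<rho>
  proof -
    obtain f where "f \<in> C1" "L f \<le> Rr \<rho> + 1" using dB[OF r, of 1] by auto
    then show ?thesis using Lb[of f] by linarith
  qed
  have bL: "bdd_below (L ` C1)" using Lb by (intro bdd_belowI2) 
  have bR: "bdd_below (Rr ` P1)" using Rb by (intro bdd_belowI2)
  have le1: "(INF f\<in>C1. L f) \<le> (INF \<rho>\<in>P1. Rr \<rho>)"
  proof (rule cINF_greatest[OF P1ne])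
    fix \<rho> :: "'a measure" assume r: "\<rho> \<in> P1"
    show "(INF f\<in>C1. L f) \<le> Rr \<rho>"
    proof (rule field_le_epsilon)
      fix e :: real assume e: "e > 0"
      obtain f where f: "f \<in> C1" "L f \<le> Rr \<rho> + e" using dB[OF r e] by auto
      have "(INF f\<in>C1. L f) \<le> L f" by (rule cINF_lower[OF bL f(1)])
      then show "(INF f\<in>C1. L f) \<le> Rr \<rho> + e" using f by linarith
    qed
  qed
  have le2: "(INF \<rho>\<in>P1. Rr \<rho>) \<le> (INF f\<in>C1. L f)"
  proof (rule cINF_greatest[OF C1ne])
    fix f :: "'a \<Rightarrow> real" assume f: "f \<in> C1"
    show "(INF \<rho>\<in>P1. Rr \<rho>) \<le> L f"
    proof (rule field_le_epsilon)
      fix e :: real assume e: "e > 0"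
      obtain \<rho> where r: "\<rho> \<in> P1" "Rr \<rho> \<le> L f + e" using dA[OF f e] by auto
      have "(INF \<rho>\<in>P1. Rr \<rho>) \<le> Rr \<rho>" by (rule cINF_lower[OF bR r(1)])
      then show "(INF \<rho>\<in>P1. Rr \<rho>) \<le> L f + e" using r by linarith
    qed
  qed
  from le1 le2 show ?thesis unfolding L_def Rr_def by linarith
qed


end
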